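(* For $j=1,\dots,J$ let $X_j\in\mathbb{R}^{n_j\times m}$ have reduced singular value decomposition $X_j=P_j\Sigma_jQ_j^T$, where $P_j\in\mathbb{R}^{n_j\times r_j}$ and $Q_j\in\mathbb{R}^{m\times r_j}$ have orthonormal columns and $\Sigma_j\in\mathbb{R}^{r_j\times r_j}$ is diagonal with positive diagonal entries. Set $A_j=P_j^T\in\mathbb{R}^{r_j\times n_j}$ and $B_j=-\Sigma_j^{-1}Q_j^T\in\mathbb{R}^{r_j\times m}$, and fix a positive integer $\ell$. Consider the problem $$\min_{W_1,\dots,W_J,Z}\ \sum_{j=1}^J\|W_j\|_1\quad\text{s.t.}\quad A_jW_j+B_jZ=0\ (j=1,\dots,J),\qquad Z^TZ=I_\ell,$$ over $W_j\in\mathbb{R}^{n_j\times\ell}$, $Z\in\mathbb{R}^{m\times\ell}$. Let $(W_1^*,\dots,W_J^*,Z^* )$ be a local minimizer of this problem. Then there exist matrices $\Lambda^*_{1,j}\in\mathbb{R}^{r_j\times\ell}$ ($j=1,\dots,J$) and $\Lambda^*_2\in\mathbb{R}^{\ell\times\ell}$ such that for each $j=1,\dots,J$: $$A_j^T\Lambda^*_{1,j}\in\partial\|W_j^*\|_1,\qquad \sum_{j=1}^J B_j^T\Lambda^*_{1,j}+Z^*\Lambda^*_2=0,\qquad A_jW_j^*+B_jZ^*=0,\qquad (Z^* )^TZ^*=I_\ell.$$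
   Context: For a matrix $W$, $\|W\|_1$ denotes the sum of the $\ell_1$ norms of its columns, i.e. the sum of the absolute values of all its entries. $\partial\|W\|_1$ denotes the (convex) subdifferential of the function $\|\cdot\|_1$ at $W$, with matrices paired via the trace inner product $\langle U,V\rangle=\mathrm{Trace}(U^TV)$. *)

theory Defs
  imports "Jordan_Normal_Form.Matrix"
begin

definition l1_norm_mat :: "real mat \<Rightarrow> real" where
  "l1_norm_mat M = (\<Sum>i<dim_row M. \<Sum>k<dim_col M. \<bar>M $$ (i,k)\<bar>)"

definition mtrace :: "real mat \<Rightarrow> real" where
  "mtrace M = (\<Sum>i<dim_row M. M $$ (i,i))"

definition tr_inner :: "real mat \<Rightarrow> real mat \<Rightarrow> real" where
  "tr_inner U V = mtrace (transpose_mat U * V)"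

definition subdiff_l1 :: "real mat \<Rightarrow> real mat set" where
  "subdiff_l1 W = {G \<in> carrier_mat (dim_row W) (dim_col W).
      \<forall>V \<in> carrier_mat (dim_row W) (dim_col W).
        l1_norm_mat V \<ge> l1_norm_mat W + tr_inner G (V - W)}"

definition fro_norm :: "real mat \<Rightarrow> real" where
  "fro_norm M = sqrt (\<Sum>i<dim_row M. \<Sum>k<dim_col M. (M $$ (i,k))^2)"

definition msum :: "nat \<Rightarrow> nat \<Rightarrow> nat \<Rightarrow> (nat \<Rightarrow> real mat) \<Rightarrow> real mat" where
  "msum nr nc J F = mat nr nc (\<lambda>(i,k). \<Sum>j\<in>{1..J}. F j $$ (i,k))"

definition feasible ::
  "nat \<Rightarrow> (nat \<Rightarrow> nat) \<Rightarrow> (nat \<Rightarrow> nat) \<Rightarrow> nat \<Rightarrow> nat \<Rightarrow>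
   (nat \<Rightarrow> real mat) \<Rightarrow> (nat \<Rightarrow> real mat) \<Rightarrow> (nat \<Rightarrow> real mat) \<Rightarrow> real mat \<Rightarrow> bool" where
  "feasible J n r m l A B W Z \<longleftrightarrow>
     Z \<in> carrier_mat m l \<and> transpose_mat Z * Z = 1\<^sub>m l \<and>
     (\<forall>j\<in>{1..J}. W j \<in> carrier_mat (n j) l \<and> A j * W j + B j * Z = 0\<^sub>m (r j) l)"

definition objective :: "nat \<Rightarrow> (nat \<Rightarrow> real mat) \<Rightarrow> real" where
  "objective J W = (\<Sum>j\<in>{1..J}. l1_norm_mat (W j))"

definition local_minimizer ::
  "nat \<Rightarrow> (nat \<Rightarrow> nat) \<Rightarrow> (nat \<Rightarrow> nat) \<Rightarrow> nat \<Rightarrow> nat \<Rightarrow>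
   (nat \<Rightarrow> real mat) \<Rightarrow> (nat \<Rightarrow> real mat) \<Rightarrow> (nat \<Rightarrow> real mat) \<Rightarrow> real mat \<Rightarrow> bool" where
  "local_minimizer J n r m l A B Ws Zs \<longleftrightarrow>
     feasible J n r m l A B Ws Zs \<and>
     (\<exists>\<epsilon>>0. \<forall>W Z. feasible J n r m l A B W Z \<and>
        (\<Sum>j\<in>{1..J}. (fro_norm (W j - Ws j))^2) + (fro_norm (Z - Zs))^2 < \<epsilon>^2
        \<longrightarrow> objective J Ws \<le> objective J W)"

end

theory Submission
  imports Defs "Jordan_Normal_Form.Determinant"
begin


definition subsp :: "('i \<Rightarrow> real) set \<Rightarrow> bool" where
  "subsp M \<longleftrightarrow> (\<lambda>_. 0) \<in> M \<and> (\<forall>x\<in>M. \<forall>y\<in>M. (\<lambda>i. x i + y i) \<in> M) \<and> (\<forall>x\<in>M. \<forall>c. (\<lambda>i. c * x i) \<in> M)"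

definition linon :: "('i \<Rightarrow> real) set \<Rightarrow> (('i \<Rightarrow> real) \<Rightarrow> real) \<Rightarrow> bool" where
  "linon M g \<longleftrightarrow> (\<forall>x\<in>M. \<forall>y\<in>M. g (\<lambda>i. x i + y i) = g x + g y) \<and> (\<forall>x\<in>M. \<forall>c. g (\<lambda>i. c * x i) = c * g x)"

definition sublin :: "(('i \<Rightarrow> real) \<Rightarrow> real) \<Rightarrow> bool" where
  "sublin p \<longleftrightarrow> (\<forall>x y. p (\<lambda>i. x i + y i) \<le> p x + p y) \<and> (\<forall>x c. c > 0 \<longrightarrow> p (\<lambda>i. c * x i) = c * p x)"

lemma subspD:
  assumes "subsp M"
  shows "(\<lambda>_. 0) \<in> M" "x \<in> M \<Longrightarrow> y \<in> M \<Longrightarrow> (\<lambda>i. x i + y i) \<in> M" "x \<in> M \<Longrightarrow> (\<lambda>i. c * x i) \<in> M"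
  using assms unfolding subsp_def by auto

lemma linonD:
  assumes "linon M g"
  shows "x \<in> M \<Longrightarrow> y \<in> M \<Longrightarrow> g (\<lambda>i. x i + y i) = g x + g y" "x \<in> M \<Longrightarrow> g (\<lambda>i. c * x i) = c * g x"
  using assms unfolding linon_def by auto

lemma hb_step:
  assumes p: "sublin p" and M: "subsp M" and g: "linon M g" and le: "\<forall>x\<in>M. g x \<le> p x"
  shows "\<exists>M' g'. subsp M' \<and> linon M' g' \<and> M \<subseteq> M' \<and> v \<in> M' \<and> (\<forall>x\<in>M. g' x = g x) \<and> (\<forall>x\<in>M'. g' x \<le> p x)"
proof (cases "v \<in> M")
  case True
  then show ?thesis using M g le by blast
next
  case False
  have padd: "p (\<lambda>i. x i + y i) \<le> p x + p y" for x y using p unfolding sublin_def by blast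
  have phom: "c > 0 \<Longrightarrow> p (\<lambda>i. c * x i) = c * p x" for c x using p unfolding sublin_def by blast
  have g0: "g (\<lambda>_. 0) = 0"
    using linonD(2)[OF g subspD(1)[OF M], of 0] by simp
  have uniq: "a = b" if "x \<in> M" "y \<in> M" "(\<lambda>i. x i + a * v i) = (\<lambda>i. y i + b * v i)" for x y a b
  proof (rule ccontr)
    assume ab: "a \<noteq> b"
    have "(\<lambda>i. (1/(b - a)) * ((\<lambda>i. x i + (-1) * y i) i)) \<in> M"
      using that M by (intro subspD) (auto intro: subspD)
    moreover have "(\<lambda>i. (1/(b - a)) * ((\<lambda>i. x i + (-1) * y i) i)) = v"
    proof
      fix i
      have "x i + a * v i = y i + b * v i" using fun_cong[OF that(3), of i] by simp
      then show "(1/(b - a)) * ((\<lambda>i. x i + (-1) * y i) i) = v i" using ab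
        by (simp add: field_simps)
    qed
    ultimately show False using False by simp
  qed
  define S where "S = {g y - p (\<lambda>i. y i + (-1) * v i) | y. y \<in> M}"
  define c where "c = Sup S"
  have Sne: "S \<noteq> {}" using subspD(1)[OF M] unfolding S_def by blast
  have Sbd: "s \<le> p (\<lambda>i. x i + v i) - g x" if sS: "s \<in> S" and xM: "x \<in> M" for s x
  proof -
    obtain y where y: "y \<in> M" "s = g y - p (\<lambda>i. y i + (-1) * v i)" using sS unfolding S_def by blast
    have "g y + g x = g (\<lambda>i. y i + x i)" using linonD(1)[OF g y(1) xM] by simp
    also have "\<dots> \<le> p (\<lambda>i. y i + x i)" using le subspD(2)[OF M y(1) xM] by blast
    also have "(\<lambda>i. y i + x i) = (\<lambda>i. (\<lambda>i. y i + (-1) * v i) i + (\<lambda>i. x i + v i) i)" by auto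
    also have "p \<dots> \<le> p (\<lambda>i. y i + (-1) * v i) + p (\<lambda>i. x i + v i)" by (rule padd)
    finally show ?thesis using y by simp
  qed
  have bdd: "bdd_above S"
    using Sbd[OF _ subspD(1)[OF M]] by (intro bdd_aboveI[of _ "p v - g (\<lambda>_. 0)"]) simp
  have c_up: "s \<le> c" if "s \<in> S" for s unfolding c_def using that bdd by (rule cSup_upper)
  have c_low: "c \<le> p (\<lambda>i. x i + v i) - g x" if "x \<in> M" for x
    unfolding c_def using Sne Sbd[OF _ that] by (rule cSup_least)
  define M' where "M' = {(\<lambda>i. x i + a * v i) | x a. x \<in> M}"
  define coef where "coef z = (SOME a. \<exists>x\<in>M. z = (\<lambda>i. x i + a * v i))" for z
  define g' where "g' z = g (\<lambda>i. z i - coef z * v i) + coef z * c" for z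
  have g'eq: "g' (\<lambda>i. x i + a * v i) = g x + a * c" if "x \<in> M" for x a
  proof -
    define z where "z = (\<lambda>i. x i + a * v i)"
    have ex: "\<exists>b. \<exists>x'\<in>M. z = (\<lambda>i. x' i + b * v i)" using that unfolding z_def by blast
    have "\<exists>x'\<in>M. z = (\<lambda>i. x' i + coef z * v i)"
      unfolding coef_def using someI_ex[OF ex] .
    then obtain x' where x': "x' \<in> M" "(\<lambda>i. x i + a * v i) = (\<lambda>i. x' i + coef (\<lambda>i. x i + a * v i) * v i)"
      unfolding z_def by blast
    have ca: "coef (\<lambda>i. x i + a * v i) = a" using uniq[OF that x'(1) x'(2)] by simp
    show ?thesis unfolding g'_def ca by simp
  qed
  have M'I: "(\<lambda>i. x i + a * v i) \<in> M'" if "x \<in> M" for x a using that unfolding M'_def by blast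
  have M'E: "\<exists>x a. x \<in> M \<and> z = (\<lambda>i. x i + a * v i)" if "z \<in> M'" for z using that unfolding M'_def by blast
  show ?thesis
  proof (intro exI conjI)
    show "subsp M'" unfolding subsp_def
    proof (intro conjI ballI allI)
      show "(\<lambda>_. 0) \<in> M'" using M'I[OF subspD(1)[OF M], of 0] by simp
    next
      fix z w assume "z \<in> M'" "w \<in> M'"
      then obtain x a y b where xy: "x \<in> M" "y \<in> M" "z = (\<lambda>i. x i + a * v i)" "w = (\<lambda>i. y i + b * v i)"
        using M'E by metis
      have "(\<lambda>i. z i + w i) = (\<lambda>i. (\<lambda>i. x i + y i) i + (a + b) * v i)" using xy by (auto simp: algebra_simps)
      then show "(\<lambda>i. z i + w i) \<in> M'" using M'I[OF subspD(2)[OF M xy(1,2)]] by simp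
    next
      fix z d assume "z \<in> M'"
      then obtain x a where xy: "x \<in> M" "z = (\<lambda>i. x i + a * v i)" using M'E by metis
      have "(\<lambda>i. d * z i) = (\<lambda>i. (\<lambda>i. d * x i) i + (d * a) * v i)" using xy by (auto simp: algebra_simps)
      then show "(\<lambda>i. d * z i) \<in> M'" using M'I[OF subspD(3)[OF M xy(1)]] by simp
    qed
    show "linon M' g'" unfolding linon_def
    proof (intro conjI ballI allI)
      fix z w assume "z \<in> M'" "w \<in> M'"
      then obtain x a y b where xy: "x \<in> M" "y \<in> M" "z = (\<lambda>i. x i + a * v i)" "w = (\<lambda>i. y i + b * v i)"
        using M'E by metis
      have "(\<lambda>i. z i + w i) = (\<lambda>i. (\<lambda>i. x i + y i) i + (a + b) * v i)" using xy by (auto simp: algebra_simps)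
      then have "g' (\<lambda>i. z i + w i) = g (\<lambda>i. x i + y i) + (a + b) * c"
        using g'eq[OF subspD(2)[OF M xy(1,2)]] by simp
      moreover have "g' z = g x + a * c" using g'eq[OF xy(1)] xy(3) by simp
      moreover have "g' w = g y + b * c" using g'eq[OF xy(2)] xy(4) by simp
      ultimately show "g' (\<lambda>i. z i + w i) = g' z + g' w"
        using linonD(1)[OF g xy(1,2)] by (simp add: algebra_simps)
    next
      fix z d assume "z \<in> M'"
      then obtain x a where xy: "x \<in> M" "z = (\<lambda>i. x i + a * v i)" using M'E by metis
      have "(\<lambda>i. d * z i) = (\<lambda>i. (\<lambda>i. d * x i) i + (d * a) * v i)" using xy by (auto simp: algebra_simps)
      then have "g' (\<lambda>i. d * z i) = g (\<lambda>i. d * x i) + (d * a) * c"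
        using g'eq[OF subspD(3)[OF M xy(1)]] by simp
      moreover have "g' z = g x + a * c" using g'eq[OF xy(1)] xy(2) by simp
      ultimately show "g' (\<lambda>i. d * z i) = d * g' z"
        using linonD(2)[OF g xy(1)] by (simp add: algebra_simps)
    qed
    show "M \<subseteq> M'"
    proof
      fix x assume "x \<in> M" then show "x \<in> M'" using M'I[of x 0] by simp
    qed
    show "v \<in> M'" using M'I[OF subspD(1)[OF M], of 1] by simp
    show "\<forall>x\<in>M. g' x = g x" using g'eq[of _ 0] by simp
    show "\<forall>z\<in>M'. g' z \<le> p z"
    proof
      fix z assume "z \<in> M'"
      then obtain x a where xa: "x \<in> M" "z = (\<lambda>i. x i + a * v i)" using M'E by metis
      have "g x + a * c \<le> p (\<lambda>i. x i + a * v i)"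
      proof (cases a "0::real" rule: linorder_cases)
        case equal then show ?thesis using le xa by simp
      next
        case greater
        define x' where "x' = (\<lambda>i. (1/a) * x i)"
        have x'M: "x' \<in> M" unfolding x'_def using subspD(3)[OF M xa(1)] .
        have "c \<le> p (\<lambda>i. x' i + v i) - g x'" by (rule c_low[OF x'M])
        then have "a * c \<le> a * p (\<lambda>i. x' i + v i) - a * g x'" using greater
          by (simp add: right_diff_distrib[symmetric])
        also have "a * p (\<lambda>i. x' i + v i) = p (\<lambda>i. a * (x' i + v i))" using phom[OF greater] by simp
        also have "(\<lambda>i. a * (x' i + v i)) = (\<lambda>i. x i + a * v i)" unfolding x'_def using greater
          by (auto simp: field_simps)
        also have "a * g x' = g x"
        proof -
          have "g x' = (1/a) * g x" unfolding x'_def by (rule linonD(2)[OF g xa(1)])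
          then show ?thesis using greater by simp
        qed
        finally show ?thesis by simp
      next
        case less
        define b where "b = - a"
        have b: "b > 0" using less b_def by simp
        define x' where "x' = (\<lambda>i. (1/b) * x i)"
        have x'M: "x' \<in> M" unfolding x'_def using subspD(3)[OF M xa(1)] .
        have "g x' - p (\<lambda>i. x' i + (-1) * v i) \<le> c" using c_up x'M unfolding S_def by blast
        then have "b * g x' - b * p (\<lambda>i. x' i + (-1) * v i) \<le> b * c" using b
          by (simp add: right_diff_distrib[symmetric])
        also have "b * p (\<lambda>i. x' i + (-1) * v i) = p (\<lambda>i. b * (x' i + (-1) * v i))" using phom[OF b] by simp
        also have "(\<lambda>i. b * (x' i + (-1) * v i)) = (\<lambda>i. x i + a * v i)" unfolding x'_def b_def using b b_def
          by (auto simp: field_simps)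
        also have "b * g x' = g x"
        proof -
          have "g x' = (1/b) * g x" unfolding x'_def by (rule linonD(2)[OF g xa(1)])
          then show ?thesis using b by simp
        qed
        finally show ?thesis unfolding b_def by simp
      qed
      then show "g' z \<le> p z" using g'eq[OF xa(1)] xa by simp
    qed
  qed
qed

lemma hb_fin:
  assumes "finite S"
  shows "sublin p \<Longrightarrow> subsp M \<Longrightarrow> linon M g \<Longrightarrow> \<forall>x\<in>M. g x \<le> p x \<Longrightarrow>
    \<exists>M' g'. subsp M' \<and> linon M' g' \<and> M \<subseteq> M' \<and> S \<subseteq> M' \<and> (\<forall>x\<in>M. g' x = g x) \<and> (\<forall>x\<in>M'. g' x \<le> p x)"
  using assms
proof (induction S arbitrary: M g rule: finite_induct)
  case empty
  then show ?case by blast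
next
  case (insert v S)
  obtain M1 g1 where 1: "subsp M1" "linon M1 g1" "M \<subseteq> M1" "v \<in> M1" "\<forall>x\<in>M. g1 x = g x" "\<forall>x\<in>M1. g1 x \<le> p x"
    using hb_step[OF insert.prems(1-4), of v] by blast
  obtain M2 g2 where 2: "subsp M2" "linon M2 g2" "M1 \<subseteq> M2" "S \<subseteq> M2" "\<forall>x\<in>M1. g2 x = g1 x" "\<forall>x\<in>M2. g2 x \<le> p x"
    using insert.IH[OF insert.prems(1) 1(1,2,6)] by blast
  show ?case using 1 2 by (intro exI[of _ M2] exI[of _ g2]) auto
qed

definition ev :: "'i \<Rightarrow> 'i \<Rightarrow> real" where "ev x = (\<lambda>y. if y = x then 1 else 0)"

lemma span_sum:
  assumes M: "subsp M" and g: "linon M g" and ev: "\<forall>x\<in>I. ev x \<in> M" and fin: "finite I"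
  shows "(\<lambda>y. \<Sum>x\<in>I. d x * ev x y) \<in> M \<and> g (\<lambda>y. \<Sum>x\<in>I. d x * ev x y) = (\<Sum>x\<in>I. d x * g (ev x))"
  using fin ev
proof (induction I rule: finite_induct)
  case empty
  have "g (\<lambda>_. 0) = 0" using linonD(2)[OF g subspD(1)[OF M], of 0] by simp
  then show ?case using subspD(1)[OF M] by simp
next
  case (insert a I)
  have e: "ev a \<in> M" using insert by simp
  have IH: "(\<lambda>y. \<Sum>x\<in>I. d x * ev x y) \<in> M" "g (\<lambda>y. \<Sum>x\<in>I. d x * ev x y) = (\<Sum>x\<in>I. d x * g (ev x))"
    using insert by auto
  have eq: "(\<lambda>y. \<Sum>x\<in>insert a I. d x * ev x y) = (\<lambda>y. (\<lambda>y. d a * ev a y) y + (\<lambda>y. \<Sum>x\<in>I. d x * ev x y) y)"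
    using insert by simp
  show ?case unfolding eq
    using subspD(2)[OF M subspD(3)[OF M e] IH(1)] linonD(1)[OF g subspD(3)[OF M e] IH(1)] linonD(2)[OF g e] IH(2) insert
    by simp
qed

lemma sum_ev:
  assumes "finite I" "\<forall>y. y \<notin> I \<longrightarrow> d y = 0"
  shows "(\<lambda>y. \<Sum>x\<in>I. d x * ev x y) = d"
proof
  fix y
  show "(\<Sum>x\<in>I. d x * ev x y) = d y"
    using assms by (cases "y \<in> I") (auto simp: ev_def if_distrib sum.delta cong: if_cong)
qed

lemma hb_coord:
  assumes fin: "finite I" and p: "sublin p" and L: "subsp L"
    and Lsupp: "\<forall>d\<in>L. \<forall>y. y \<notin> I \<longrightarrow> d y = 0"
    and pL: "\<forall>d\<in>L. p d \<ge> 0"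
  shows "\<exists>cf. (\<forall>x\<in>I. cf x \<le> p (ev x) \<and> - cf x \<le> p (\<lambda>y. - ev x y)) \<and>
              (\<forall>d\<in>L. (\<Sum>x\<in>I. d x * cf x) = 0)"
proof -
  have g0: "linon L (\<lambda>_. 0)" unfolding linon_def by simp
  obtain M g where M: "subsp M" "linon M g" "L \<subseteq> M" "ev ` I \<subseteq> M" "\<forall>x\<in>L. g x = 0" "\<forall>x\<in>M. g x \<le> p x"
    using hb_fin[of "ev ` I" p L "\<lambda>_. 0"] fin p L g0 pL by auto
  have evM: "\<forall>x\<in>I. ev x \<in> M" using M(4) by auto
  show ?thesis
  proof (intro exI[of _ "\<lambda>x. g (ev x)"] conjI ballI)
    fix x assume x: "x \<in> I"
    show "g (ev x) \<le> p (ev x)" using M(6) evM x by blast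
    have "(\<lambda>y. (-1) * ev x y) \<in> M" using subspD(3)[OF M(1)] evM x by blast
    then have "g (\<lambda>y. (-1) * ev x y) \<le> p (\<lambda>y. (-1) * ev x y)" using M(6) by blast
    then show "- g (ev x) \<le> p (\<lambda>y. - ev x y)" using linonD(2)[OF M(2), of "ev x" "-1"] evM x by simp
  next
    fix d assume d: "d \<in> L"
    have "g (\<lambda>y. \<Sum>x\<in>I. d x * ev x y) = (\<Sum>x\<in>I. d x * g (ev x))"
      using span_sum[OF M(1,2) evM fin] by blast
    moreover have "(\<lambda>y. \<Sum>x\<in>I. d x * ev x y) = d" using sum_ev[OF fin] Lsupp d by blast
    ultimately show "(\<Sum>x\<in>I. d x * g (ev x)) = 0" using M(3,5) d by auto
  qed
qed




definition frob :: "real mat \<Rightarrow> real mat \<Rightarrow> real" where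
  "frob X Y = (\<Sum>i<dim_row X. \<Sum>k<dim_col X. X $$ (i,k) * Y $$ (i,k))"

lemma l1_nonneg: "l1_norm_mat A \<ge> 0"
  unfolding l1_norm_mat_def by (intro sum_nonneg) auto

lemma entry_le_l1: assumes "i < dim_row A" "k < dim_col A" shows "\<bar>A $$ (i,k)\<bar> \<le> l1_norm_mat A"
proof -
  have "\<bar>A $$ (i,k)\<bar> \<le> (\<Sum>k'<dim_col A. \<bar>A $$ (i,k')\<bar>)"
    using assms by (intro member_le_sum) auto
  also have "\<dots> \<le> l1_norm_mat A" unfolding l1_norm_mat_def
    using assms by (intro member_le_sum[of i "{..<dim_row A}" "\<lambda>i. \<Sum>k'<dim_col A. \<bar>A $$ (i,k')\<bar>"]) (auto intro: sum_nonneg)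
  finally show ?thesis .
qed

lemma l1_add: assumes "A \<in> carrier_mat a b" "B \<in> carrier_mat a b"
  shows "l1_norm_mat (A + B) \<le> l1_norm_mat A + l1_norm_mat B"
  using assms unfolding l1_norm_mat_def
  by (auto simp: sum.distrib[symmetric] intro!: sum_mono abs_triangle_ineq)

lemma l1_minus: assumes "A \<in> carrier_mat a b" "B \<in> carrier_mat a b"
  shows "l1_norm_mat (A - B) \<le> l1_norm_mat A + l1_norm_mat B"
  using assms unfolding l1_norm_mat_def
  by (auto simp: sum.distrib[symmetric] intro!: sum_mono abs_triangle_ineq4)

lemma l1_smult: "l1_norm_mat (c \<cdot>\<^sub>m A) = \<bar>c\<bar> * l1_norm_mat A"
  unfolding l1_norm_mat_def by (auto simp: sum_distrib_left abs_mult)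

lemma l1_uminus: "l1_norm_mat (- A) = l1_norm_mat A"
  unfolding l1_norm_mat_def by auto

lemma sum_prod_le: fixes a b :: "nat \<Rightarrow> real"
  assumes "\<And>j. a j \<ge> 0" "\<And>j. b j \<ge> 0"
  shows "(\<Sum>j<n. a j * b j) \<le> (\<Sum>j<n. a j) * (\<Sum>j<n. b j)"
proof -
  have "(\<Sum>j<n. a j * b j) \<le> (\<Sum>j<n. a j * (\<Sum>j<n. b j))"
    using assms by (intro sum_mono mult_left_mono) (auto intro: member_le_sum)
  then show ?thesis by (simp add: sum_distrib_right)
qed

lemma l1_mult: assumes A: "A \<in> carrier_mat a b" and B: "B \<in> carrier_mat b c"
  shows "l1_norm_mat (A * B) \<le> l1_norm_mat A * l1_norm_mat B"
proof -
  have "l1_norm_mat (A * B) = (\<Sum>i<a. \<Sum>k<c. \<bar>\<Sum>j<b. A $$ (i,j) * B $$ (j,k)\<bar>)"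
    unfolding l1_norm_mat_def using A B
    by (auto simp: scalar_prod_def row_def col_def atLeast0LessThan intro!: sum.cong)
  also have "\<dots> \<le> (\<Sum>i<a. \<Sum>k<c. \<Sum>j<b. \<bar>A $$ (i,j)\<bar> * \<bar>B $$ (j,k)\<bar>)"
    by (intro sum_mono order.trans[OF sum_abs]) (simp add: abs_mult)
  also have "\<dots> = (\<Sum>i<a. \<Sum>j<b. \<Sum>k<c. \<bar>A $$ (i,j)\<bar> * \<bar>B $$ (j,k)\<bar>)"
    by (rule sum.cong[OF refl]) (rule sum.swap)
  also have "\<dots> = (\<Sum>j<b. \<Sum>i<a. \<Sum>k<c. \<bar>A $$ (i,j)\<bar> * \<bar>B $$ (j,k)\<bar>)"
    by (rule sum.swap)
  also have "\<dots> = (\<Sum>j<b. (\<Sum>i<a. \<bar>A $$ (i,j)\<bar>) * (\<Sum>k<c. \<bar>B $$ (j,k)\<bar>))"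
    by (simp only: sum_product)
  also have "\<dots> \<le> (\<Sum>j<b. (\<Sum>i<a. \<bar>A $$ (i,j)\<bar>)) * (\<Sum>j<b. (\<Sum>k<c. \<bar>B $$ (j,k)\<bar>))"
    by (rule sum_prod_le) (auto intro: sum_nonneg)
  also have "\<dots> = l1_norm_mat A * l1_norm_mat B"
    unfolding l1_norm_mat_def using A B by (subst (2) sum.swap) simp
  finally show ?thesis .
qed

lemma fro_sq_le: "(fro_norm A)^2 \<le> (l1_norm_mat A)^2"
proof -
  have t: "(A $$ (i,k))^2 \<le> \<bar>A $$ (i,k)\<bar> * l1_norm_mat A" if "i < dim_row A" "k < dim_col A" for i k
  proof -
    have "(A $$ (i,k))^2 = \<bar>A $$ (i,k)\<bar> * \<bar>A $$ (i,k)\<bar>" by (simp add: power2_eq_square)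
    also have "\<dots> \<le> \<bar>A $$ (i,k)\<bar> * l1_norm_mat A" by (rule mult_left_mono[OF entry_le_l1[OF that]]) simp
    finally show ?thesis .
  qed
  have "(fro_norm A)^2 = (\<Sum>i<dim_row A. \<Sum>k<dim_col A. (A $$ (i,k))^2)"
    unfolding fro_norm_def by (simp add: sum_nonneg)
  also have "\<dots> \<le> (\<Sum>i<dim_row A. \<Sum>k<dim_col A. \<bar>A $$ (i,k)\<bar> * l1_norm_mat A)"
    by (rule sum_mono, rule sum_mono, rule t) auto
  also have "\<dots> = (l1_norm_mat A)^2"
    unfolding l1_norm_mat_def by (simp add: sum_distrib_right power2_eq_square)
  finally show ?thesis .
qed

lemma frob_mult: assumes A: "A \<in> carrier_mat a c" and X: "X \<in> carrier_mat a b" and Y: "Y \<in> carrier_mat b c"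
  shows "frob A (X * Y) = frob (transpose_mat X * A) Y"
proof -
  have "frob A (X * Y) = (\<Sum>i<a. \<Sum>k<c. A $$ (i,k) * (\<Sum>j<b. X $$ (i,j) * Y $$ (j,k)))"
    unfolding frob_def using A X Y
    by (auto simp: scalar_prod_def row_def col_def atLeast0LessThan intro!: sum.cong)
  also have "\<dots> = (\<Sum>i<a. \<Sum>k<c. \<Sum>j<b. X $$ (i,j) * A $$ (i,k) * Y $$ (j,k))"
    by (simp add: sum_distrib_left algebra_simps)
  also have "\<dots> = (\<Sum>i<a. \<Sum>j<b. \<Sum>k<c. X $$ (i,j) * A $$ (i,k) * Y $$ (j,k))"
    by (rule sum.cong[OF refl]) (rule sum.swap)
  also have "\<dots> = (\<Sum>j<b. \<Sum>i<a. \<Sum>k<c. X $$ (i,j) * A $$ (i,k) * Y $$ (j,k))"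
    by (rule sum.swap)
  also have "\<dots> = (\<Sum>j<b. \<Sum>k<c. \<Sum>i<a. X $$ (i,j) * A $$ (i,k) * Y $$ (j,k))"
    by (rule sum.cong[OF refl]) (rule sum.swap)
  also have "\<dots> = (\<Sum>j<b. \<Sum>k<c. (\<Sum>i<a. X $$ (i,j) * A $$ (i,k)) * Y $$ (j,k))"
    by (simp add: sum_distrib_right)
  also have "\<dots> = frob (transpose_mat X * A) Y"
    unfolding frob_def using A X Y
    by (auto simp: scalar_prod_def row_def col_def atLeast0LessThan intro!: sum.cong)
  finally show ?thesis .
qed

lemma frob_self0: assumes A: "A \<in> carrier_mat a b" and f: "frob A A = 0"
  shows "A = 0\<^sub>m a b"
proof (rule eq_matI)
  have nn: "\<And>i. (\<Sum>k<b. A $$ (i,k) * A $$ (i,k)) \<ge> 0" by (auto intro: sum_nonneg)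
  have z: "(\<Sum>i<a. \<Sum>k<b. A $$ (i,k) * A $$ (i,k)) = 0" using f A unfolding frob_def by simp
  fix i j assume ij: "i < dim_row (0\<^sub>m a b)" "j < dim_col (0\<^sub>m a b)"
  have "(\<Sum>k<b. A $$ (i,k) * A $$ (i,k)) = 0" using sum_nonneg_eq_0_iff[of "{..<a}", OF _ nn] z ij by auto
  then have "A $$ (i,j) * A $$ (i,j) = 0" using sum_nonneg_eq_0_iff[of "{..<b}" "\<lambda>k. A $$ (i,k) * A $$ (i,k)"] ij by auto
  then show "A $$ (i,j) = 0\<^sub>m a b $$ (i,j)" using ij by simp
qed (use A in auto)

lemma frob_add2: assumes "A \<in> carrier_mat a b" "X \<in> carrier_mat a b" "Y \<in> carrier_mat a b"
  shows "frob A (X + Y) = frob A X + frob A Y"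
  using assms unfolding frob_def by (auto simp: algebra_simps sum.distrib)

lemma frob_minus2: assumes "A \<in> carrier_mat a b" "X \<in> carrier_mat a b" "Y \<in> carrier_mat a b"
  shows "frob A (X - Y) = frob A X - frob A Y"
  using assms unfolding frob_def by (auto simp: algebra_simps sum_subtractf)

lemma frob_comm: assumes "A \<in> carrier_mat a b" "X \<in> carrier_mat a b"
  shows "frob A X = frob X A"
  using assms unfolding frob_def by (auto simp: algebra_simps)

lemma frob_uminus1: "frob (- A) X = - frob A X"
  unfolding frob_def by (auto simp: sum_negf)

lemma tr_inner_frob: assumes "G \<in> carrier_mat a b" "V \<in> carrier_mat a b"
  shows "tr_inner G V = frob G V"
proof -
  have "tr_inner G V = (\<Sum>i<b. \<Sum>j<a. G $$ (j,i) * V $$ (j,i))"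
    using assms unfolding tr_inner_def mtrace_def
    by (auto simp: scalar_prod_def row_def col_def atLeast0LessThan intro!: sum.cong)
  also have "\<dots> = frob G V" unfolding frob_def using assms by (subst sum.swap) simp
  finally show ?thesis .
qed




declare minus_carrier_mat[simp]

lemma TT_entry: assumes "A \<in> carrier_mat m l" "B \<in> carrier_mat m q" "i < l" "k < q"
  shows "(transpose_mat A * B) $$ (i,k) = (\<Sum>a<m. A $$ (a,i) * B $$ (a,k))"
  using assms by (auto simp: scalar_prod_def row_def col_def atLeast0LessThan intro!: sum.cong)

lemma transpose_smult_mat: "transpose_mat (c \<cdot>\<^sub>m A) = c \<cdot>\<^sub>m transpose_mat A"
  by (intro eq_matI) auto

lemma transpose_zero_mat: "transpose_mat (0\<^sub>m a b) = 0\<^sub>m b a"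
  by (intro eq_matI) auto

lemma gram_expand:
  fixes Z D :: "real mat"
  assumes Z: "Z \<in> carrier_mat m l" and D: "D \<in> carrier_mat m l"
    and ZZ: "transpose_mat Z * Z = 1\<^sub>m l" and ZD: "transpose_mat Z * D = 0\<^sub>m l l"
  shows "transpose_mat (Z + s \<cdot>\<^sub>m D) * (Z + s \<cdot>\<^sub>m D) = 1\<^sub>m l + (s^2) \<cdot>\<^sub>m (transpose_mat D * D)"
    "transpose_mat (Z + s \<cdot>\<^sub>m D) * Z = 1\<^sub>m l"
    "transpose_mat Z * (Z + s \<cdot>\<^sub>m D) = 1\<^sub>m l"
proof -
  have ZZe: "(\<Sum>a<m. Z $$ (a,i) * Z $$ (a,k)) = (if i = k then 1 else 0)" if "i < l" "k < l" for i k
    using arg_cong[OF ZZ, of "\<lambda>X. X $$ (i,k)"] TT_entry[OF Z Z that] that by simp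
  have ZDe: "(\<Sum>a<m. Z $$ (a,i) * D $$ (a,k)) = 0" if "i < l" "k < l" for i k
    using arg_cong[OF ZD, of "\<lambda>X. X $$ (i,k)"] TT_entry[OF Z D that] that by simp
  have ZDe': "(\<Sum>a<m. D $$ (a,i) * Z $$ (a,k)) = 0" if "i < l" "k < l" for i k
    using ZDe[OF that(2,1)] by (simp add: mult.commute)
  have W: "Z + s \<cdot>\<^sub>m D \<in> carrier_mat m l" using Z D by simp
  show "transpose_mat (Z + s \<cdot>\<^sub>m D) * (Z + s \<cdot>\<^sub>m D) = 1\<^sub>m l + (s^2) \<cdot>\<^sub>m (transpose_mat D * D)"
  proof (rule eq_matI)
    fix i k assume ik: "i < dim_row (1\<^sub>m l + (s^2) \<cdot>\<^sub>m (transpose_mat D * D))" "k < dim_col (1\<^sub>m l + (s^2) \<cdot>\<^sub>m (transpose_mat D * D))"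
    then have ik: "i < l" "k < l" using D by auto
    have "(transpose_mat (Z + s \<cdot>\<^sub>m D) * (Z + s \<cdot>\<^sub>m D)) $$ (i,k)
        = (\<Sum>a<m. (Z $$ (a,i) + s * D $$ (a,i)) * (Z $$ (a,k) + s * D $$ (a,k)))"
      using TT_entry[OF W W ik] ik Z D by (auto intro!: sum.cong)
    also have "\<dots> = (\<Sum>a<m. Z $$ (a,i) * Z $$ (a,k)) + s * (\<Sum>a<m. Z $$ (a,i) * D $$ (a,k))
        + s * (\<Sum>a<m. D $$ (a,i) * Z $$ (a,k)) + s^2 * (\<Sum>a<m. D $$ (a,i) * D $$ (a,k))"
      by (simp add: sum.distrib sum_distrib_left algebra_simps power2_eq_square)
    also have "\<dots> = (1\<^sub>m l + (s^2) \<cdot>\<^sub>m (transpose_mat D * D)) $$ (i,k)"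
      using ZZe[OF ik] ZDe[OF ik] ZDe'[OF ik] TT_entry[OF D D ik] ik D by simp
    finally show "(transpose_mat (Z + s \<cdot>\<^sub>m D) * (Z + s \<cdot>\<^sub>m D)) $$ (i,k) = (1\<^sub>m l + (s^2) \<cdot>\<^sub>m (transpose_mat D * D)) $$ (i,k)" .
  qed (use Z D in auto)
  show "transpose_mat (Z + s \<cdot>\<^sub>m D) * Z = 1\<^sub>m l"
  proof (rule eq_matI)
    fix i k assume ik: "i < dim_row (1\<^sub>m l)" "k < dim_col (1\<^sub>m l)"
    then have ik: "i < l" "k < l" by auto
    have "(transpose_mat (Z + s \<cdot>\<^sub>m D) * Z) $$ (i,k) = (\<Sum>a<m. (Z $$ (a,i) + s * D $$ (a,i)) * Z $$ (a,k))"
      using TT_entry[OF W Z ik] ik Z D by (auto intro!: sum.cong)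
    also have "\<dots> = (\<Sum>a<m. Z $$ (a,i) * Z $$ (a,k)) + s * (\<Sum>a<m. D $$ (a,i) * Z $$ (a,k))"
      by (simp add: sum.distrib sum_distrib_left algebra_simps)
    also have "\<dots> = 1\<^sub>m l $$ (i,k)" using ZZe[OF ik] ZDe'[OF ik] ik by simp
    finally show "(transpose_mat (Z + s \<cdot>\<^sub>m D) * Z) $$ (i,k) = 1\<^sub>m l $$ (i,k)" .
  qed (use Z D in auto)
  show "transpose_mat Z * (Z + s \<cdot>\<^sub>m D) = 1\<^sub>m l"
  proof (rule eq_matI)
    fix i k assume ik: "i < dim_row (1\<^sub>m l)" "k < dim_col (1\<^sub>m l)"
    then have ik: "i < l" "k < l" by auto
    have "(transpose_mat Z * (Z + s \<cdot>\<^sub>m D)) $$ (i,k) = (\<Sum>a<m. Z $$ (a,i) * (Z $$ (a,k) + s * D $$ (a,k)))"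
      using TT_entry[OF Z W ik] ik Z D by (auto intro!: sum.cong)
    also have "\<dots> = (\<Sum>a<m. Z $$ (a,i) * Z $$ (a,k)) + s * (\<Sum>a<m. Z $$ (a,i) * D $$ (a,k))"
      by (simp add: sum.distrib sum_distrib_left algebra_simps)
    also have "\<dots> = 1\<^sub>m l $$ (i,k)" using ZZe[OF ik] ZDe[OF ik] ik by simp
    finally show "(transpose_mat Z * (Z + s \<cdot>\<^sub>m D)) $$ (i,k) = 1\<^sub>m l $$ (i,k)" .
  qed (use Z D in auto)
qed


lemma gram_lin:
  fixes X Y :: "real mat"
  assumes X: "X \<in> carrier_mat m l" and Y: "Y \<in> carrier_mat m l"
  shows "transpose_mat (2 \<cdot>\<^sub>m X - Y) * (2 \<cdot>\<^sub>m X - Y) =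
     4 \<cdot>\<^sub>m (transpose_mat X * X) - 2 \<cdot>\<^sub>m (transpose_mat X * Y) - 2 \<cdot>\<^sub>m (transpose_mat Y * X) + transpose_mat Y * Y"
proof (rule eq_matI)
  have W: "2 \<cdot>\<^sub>m X - Y \<in> carrier_mat m l" using X Y by simp
  fix i k assume ik: "i < dim_row (4 \<cdot>\<^sub>m (transpose_mat X * X) - 2 \<cdot>\<^sub>m (transpose_mat X * Y) - 2 \<cdot>\<^sub>m (transpose_mat Y * X) + transpose_mat Y * Y)"
     "k < dim_col (4 \<cdot>\<^sub>m (transpose_mat X * X) - 2 \<cdot>\<^sub>m (transpose_mat X * Y) - 2 \<cdot>\<^sub>m (transpose_mat Y * X) + transpose_mat Y * Y)"
  then have ik: "i < l" "k < l" using X Y by auto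
  have "(transpose_mat (2 \<cdot>\<^sub>m X - Y) * (2 \<cdot>\<^sub>m X - Y)) $$ (i,k) =
      (\<Sum>a<m. (2 * X $$ (a,i) - Y $$ (a,i)) * (2 * X $$ (a,k) - Y $$ (a,k)))"
    using TT_entry[OF W W ik] ik X Y by (auto intro!: sum.cong)
  also have "\<dots> = 4 * (\<Sum>a<m. X $$ (a,i) * X $$ (a,k)) - 2 * (\<Sum>a<m. X $$ (a,i) * Y $$ (a,k))
      - 2 * (\<Sum>a<m. Y $$ (a,i) * X $$ (a,k)) + (\<Sum>a<m. Y $$ (a,i) * Y $$ (a,k))"
    by (simp add: sum.distrib sum_distrib_left sum_subtractf algebra_simps)
  also have "\<dots> = (4 \<cdot>\<^sub>m (transpose_mat X * X) - 2 \<cdot>\<^sub>m (transpose_mat X * Y) - 2 \<cdot>\<^sub>m (transpose_mat Y * X) + transpose_mat Y * Y) $$ (i,k)"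
    using TT_entry[OF X X ik] TT_entry[OF X Y ik] TT_entry[OF Y X ik] TT_entry[OF Y Y ik] ik X Y by simp
  finally show "(transpose_mat (2 \<cdot>\<^sub>m X - Y) * (2 \<cdot>\<^sub>m X - Y)) $$ (i,k) = (4 \<cdot>\<^sub>m (transpose_mat X * X) - 2 \<cdot>\<^sub>m (transpose_mat X * Y) - 2 \<cdot>\<^sub>m (transpose_mat Y * X) + transpose_mat Y * Y) $$ (i,k)" .
qed (use X Y in auto)

lemma l1_one: "l1_norm_mat (1\<^sub>m l) = real l"
proof -
  have "l1_norm_mat (1\<^sub>m l) = (\<Sum>i<l. \<Sum>k<l. if i = k then 1 else 0)"
    unfolding l1_norm_mat_def by (auto intro!: sum.cong)
  also have "\<dots> = (\<Sum>i<l. 1)" by (auto intro!: sum.cong simp: sum.delta)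
  finally show ?thesis by simp
qed

lemma inj_small:
  fixes M :: "real mat"
  assumes M: "M \<in> carrier_mat l l" and small: "c * l1_norm_mat M \<le> 1/2" and c: "c \<ge> 0"
    and v: "v \<in> carrier_vec l" and Nv: "(1\<^sub>m l + c \<cdot>\<^sub>m M) *\<^sub>v v = 0\<^sub>v l"
  shows "v = 0\<^sub>v l"
proof -
  have e: "v $ i = - c * (\<Sum>j<l. M $$ (i,j) * v $ j)" if i: "i < l" for i
  proof -
    have "((1\<^sub>m l + c \<cdot>\<^sub>m M) *\<^sub>v v) $ i = (\<Sum>j<l. ((if i = j then 1 else 0) + c * M $$ (i,j)) * v $ j)"
      using M v i by (auto simp: scalar_prod_def atLeast0LessThan intro!: sum.cong)
    also have "\<dots> = (\<Sum>j<l. (if i = j then v $ j else 0) + c * (M $$ (i,j) * v $ j))"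
      by (intro sum.cong refl) (simp add: algebra_simps)
    also have "\<dots> = v $ i + c * (\<Sum>j<l. M $$ (i,j) * v $ j)"
      using i by (simp add: sum.distrib sum_distrib_left)
    finally show ?thesis using Nv i by simp
  qed
  define S where "S = (\<Sum>i<l. \<bar>v $ i\<bar>)"
  have "S \<le> (\<Sum>i<l. c * (\<Sum>j<l. \<bar>M $$ (i,j)\<bar> * \<bar>v $ j\<bar>))"
    unfolding S_def
  proof (rule sum_mono)
    fix i assume "i \<in> {..<l}"
    then have "\<bar>v $ i\<bar> = c * \<bar>\<Sum>j<l. M $$ (i,j) * v $ j\<bar>" using e c by (simp add: abs_mult)
    also have "\<dots> \<le> c * (\<Sum>j<l. \<bar>M $$ (i,j)\<bar> * \<bar>v $ j\<bar>)"
      using c by (intro mult_left_mono order.trans[OF sum_abs]) (auto simp: abs_mult)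
    finally show "\<bar>v $ i\<bar> \<le> c * (\<Sum>j<l. \<bar>M $$ (i,j)\<bar> * \<bar>v $ j\<bar>)" .
  qed
  also have "\<dots> = c * (\<Sum>j<l. (\<Sum>i<l. \<bar>M $$ (i,j)\<bar>) * \<bar>v $ j\<bar>)"
  proof -
    have sw: "(\<Sum>i<l. \<Sum>j<l. \<bar>M $$ (i,j)\<bar> * \<bar>v $ j\<bar>) = (\<Sum>j<l. (\<Sum>i<l. \<bar>M $$ (i,j)\<bar>) * \<bar>v $ j\<bar>)"
      by (subst sum.swap) (simp add: sum_distrib_right)
    show ?thesis by (simp add: sum_distrib_left[symmetric] sw)
  qed
  also have "\<dots> \<le> c * (\<Sum>j<l. l1_norm_mat M * \<bar>v $ j\<bar>)"
  proof (intro mult_left_mono sum_mono mult_right_mono c)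
    fix j assume j: "j \<in> {..<l}"
    have "(\<Sum>i<l. \<bar>M $$ (i,j)\<bar>) = (\<Sum>i<l. \<Sum>k\<in>{j}. \<bar>M $$ (i,k)\<bar>)" by simp
    also have "\<dots> \<le> (\<Sum>i<l. \<Sum>k<l. \<bar>M $$ (i,k)\<bar>)"
      using j by (intro sum_mono sum_mono2) auto
    finally show "(\<Sum>i<l. \<bar>M $$ (i,j)\<bar>) \<le> l1_norm_mat M" unfolding l1_norm_mat_def using M by simp
  qed simp
  also have "\<dots> = (c * l1_norm_mat M) * S" unfolding S_def by (simp add: sum_distrib_left algebra_simps)
  also have "\<dots> \<le> 1/2 * S" using small by (intro mult_right_mono) (auto simp: S_def intro: sum_nonneg)
  finally have "S \<le> 0" by simp
  then have "\<forall>i\<in>{..<l}. \<bar>v $ i\<bar> = 0"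
    unfolding S_def by (subst sum_nonneg_eq_0_iff[symmetric]) (auto intro: antisym sum_nonneg)
  then show ?thesis using v by (intro eq_vecI) auto
qed


lemma stiefel_step:
  fixes Z D :: "real mat"
  assumes Z: "Z \<in> carrier_mat m l" and D: "D \<in> carrier_mat m l"
    and ZZ: "transpose_mat Z * Z = 1\<^sub>m l" and ZD: "transpose_mat Z * D = 0\<^sub>m l l"
    and s: "0 < s" "s^2 * l1_norm_mat (transpose_mat D * D) \<le> 1/2"
  shows "\<exists>Zt. Zt \<in> carrier_mat m l \<and> transpose_mat Zt * Zt = 1\<^sub>m l \<and>
     l1_norm_mat (Zt - Z - (2*s) \<cdot>\<^sub>m D) \<le> 4 * real l * (l1_norm_mat Z + s * l1_norm_mat D) * l1_norm_mat (transpose_mat D * D) * s^2"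
proof -
  define M where "M = transpose_mat D * D"
  have Mc: "M \<in> carrier_mat l l" unfolding M_def using D by simp
  define Wp where "Wp = Z + s \<cdot>\<^sub>m D"
  have Wc: "Wp \<in> carrier_mat m l" unfolding Wp_def using Z D by simp
  define N where "N = transpose_mat Wp * Wp"
  have Nc: "N \<in> carrier_mat l l" unfolding N_def using Wc by simp
  have NM: "N = 1\<^sub>m l + (s^2) \<cdot>\<^sub>m M" unfolding N_def Wp_def M_def by (rule gram_expand(1)[OF Z D ZZ ZD])
  have WZ: "transpose_mat Wp * Z = 1\<^sub>m l" unfolding Wp_def by (rule gram_expand(2)[OF Z D ZZ ZD])
  have ZW: "transpose_mat Z * Wp = 1\<^sub>m l" unfolding Wp_def by (rule gram_expand(3)[OF Z D ZZ ZD])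
  have NT: "transpose_mat N = N" unfolding N_def using Wc by (simp add: transpose_mult[of _ l m _ l])
  have dN: "det N \<noteq> 0"
  proof
    assume "det N = 0"
    then obtain v where v: "v \<in> carrier_vec l" "v \<noteq> 0\<^sub>v l" "N *\<^sub>v v = 0\<^sub>v l"
      using det_0_iff_vec_prod_zero[OF Nc] by blast
    have "v = 0\<^sub>v l" using inj_small[OF Mc _ _ v(1)] v(3) s unfolding NM M_def by simp
    then show False using v(2) by simp
  qed
  obtain Ni where Nic: "Ni \<in> carrier_mat l l" and NNi: "N * Ni = 1\<^sub>m l" and NiN: "Ni * N = 1\<^sub>m l"
    using det_non_zero_imp_unit[OF Nc dN, of "()"] unfolding Units_def ring_mat_def by auto
  have NiT: "transpose_mat Ni = Ni"
  proof -
    have "transpose_mat Ni * N = 1\<^sub>m l"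
      using arg_cong[OF NNi, of transpose_mat] Nic Nc NT by (simp add: transpose_mult[of _ l l _ l])
    then have "transpose_mat Ni * (N * Ni) = Ni"
      using Nic Nc by (simp add: assoc_mult_mat[of "transpose_mat Ni" l l N l Ni l, symmetric] del: assoc_mult_mat)
    then show ?thesis using NNi Nic by simp
  qed
  define P where "P = Wp * Ni"
  have Pc: "P \<in> carrier_mat m l" unfolding P_def using Wc Nic by simp
  have PP: "transpose_mat P * P = Ni"
  proof -
    have "transpose_mat P * P = Ni * transpose_mat Wp * (Wp * Ni)"
      unfolding P_def using Wc Nic NiT by (simp add: transpose_mult[of _ m l _ l])
    also have "\<dots> = Ni * (N * Ni)" unfolding N_def using Wc Nic
      by (simp add: assoc_mult_mat[of Ni l l "transpose_mat Wp" m "Wp * Ni" l] assoc_mult_mat[of "transpose_mat Wp" l m Wp l Ni l])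
    finally show ?thesis using NNi Nic by simp
  qed
  have PZ: "transpose_mat P * Z = Ni"
  proof -
    have "transpose_mat P * Z = Ni * transpose_mat Wp * Z"
      unfolding P_def using Wc Nic NiT by (simp add: transpose_mult[of _ m l _ l])
    also have "\<dots> = Ni * (transpose_mat Wp * Z)" using Wc Nic Z
      by (simp add: assoc_mult_mat[of _ l l _ m _ l])
    finally show ?thesis using WZ Nic by simp
  qed
  have ZP: "transpose_mat Z * P = Ni"
  proof -
    have "transpose_mat Z * P = transpose_mat Z * Wp * Ni"
      unfolding P_def using Wc Nic Z by (simp add: assoc_mult_mat[of _ l m _ l _ l])
    then show ?thesis using ZW Nic by simp
  qed
  define Zt where "Zt = 2 \<cdot>\<^sub>m P - Z"
  have Ztc: "Zt \<in> carrier_mat m l" unfolding Zt_def using Pc Z by simp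
  have orth: "transpose_mat Zt * Zt = 1\<^sub>m l"
    unfolding Zt_def gram_lin[OF Pc Z] PP PZ ZP ZZ
    by (rule eq_matI) (use Nic in auto)
  have Nim1: "Ni - 1\<^sub>m l = - (s^2) \<cdot>\<^sub>m (Ni * M)"
  proof -
    have "Ni - 1\<^sub>m l = Ni * 1\<^sub>m l - Ni * N" using NiN Nic by simp
    also have "\<dots> = Ni * (1\<^sub>m l - N)" by (rule mult_minus_distrib_mat[OF Nic one_carrier_mat Nc, symmetric])
    also have "1\<^sub>m l - N = (- (s^2)) \<cdot>\<^sub>m M" unfolding NM by (rule eq_matI) (use Mc in auto)
    also have "Ni * \<dots> = - (s^2) \<cdot>\<^sub>m (Ni * M)" using Nic Mc by (simp add: mult_smult_distrib[of _ l l])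
    finally show ?thesis .
  qed
  have E: "Zt - Z - (2*s) \<cdot>\<^sub>m D = 2 \<cdot>\<^sub>m (Wp * (Ni - 1\<^sub>m l))"
  proof -
    have "Wp * (Ni - 1\<^sub>m l) = P - Wp" unfolding P_def using Wc Nic by (simp add: mult_minus_distrib_mat[of _ m l])
    moreover have "Zt - Z - (2*s) \<cdot>\<^sub>m D = 2 \<cdot>\<^sub>m (P - Wp)"
      unfolding Zt_def Wp_def by (rule eq_matI) (use Pc Z D in \<open>auto simp: algebra_simps\<close>)
    ultimately show ?thesis by simp
  qed
  have l1Ni: "l1_norm_mat Ni \<le> 2 * real l"
  proof -
    have "Ni = 1\<^sub>m l + (Ni - 1\<^sub>m l)" by (rule eq_matI) (use Nic in auto)
    then have "l1_norm_mat Ni \<le> l1_norm_mat (1\<^sub>m l) + l1_norm_mat (Ni - 1\<^sub>m l)"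
      using l1_add[of "1\<^sub>m l" l l "Ni - 1\<^sub>m l"] Nic by simp
    also have "l1_norm_mat (Ni - 1\<^sub>m l) \<le> s^2 * (l1_norm_mat Ni * l1_norm_mat M)"
      unfolding Nim1 l1_smult using l1_mult[OF Nic Mc] by (simp add: mult_left_mono)
    finally have "l1_norm_mat Ni \<le> real l + (s^2 * l1_norm_mat M) * l1_norm_mat Ni" unfolding l1_one
      by (simp add: algebra_simps)
    moreover have "(s^2 * l1_norm_mat M) * l1_norm_mat Ni \<le> 1/2 * l1_norm_mat Ni"
      using s(2) unfolding M_def by (intro mult_right_mono l1_nonneg) auto
    ultimately show ?thesis by simp
  qed
  have l1W: "l1_norm_mat Wp \<le> l1_norm_mat Z + s * l1_norm_mat D"
    unfolding Wp_def using l1_add[OF Z smult_carrier_mat[OF D], of s] s by (simp add: l1_smult)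
  have "l1_norm_mat (Zt - Z - (2*s) \<cdot>\<^sub>m D) = 2 * l1_norm_mat (Wp * (Ni - 1\<^sub>m l))"
    unfolding E l1_smult by simp
  also have "\<dots> \<le> 2 * (l1_norm_mat Wp * l1_norm_mat (Ni - 1\<^sub>m l))"
    using l1_mult[OF Wc, of "Ni - 1\<^sub>m l" l] Nic by simp
  also have "l1_norm_mat (Ni - 1\<^sub>m l) \<le> s^2 * (l1_norm_mat Ni * l1_norm_mat M)"
    unfolding Nim1 l1_smult using l1_mult[OF Nic Mc] by (simp add: mult_left_mono)
  also have "\<dots> \<le> s^2 * (2 * real l * l1_norm_mat M)"
    using l1Ni by (intro mult_left_mono mult_right_mono l1_nonneg) auto
  finally have "l1_norm_mat (Zt - Z - (2*s) \<cdot>\<^sub>m D) \<le> 2 * (l1_norm_mat Wp * (s^2 * (2 * real l * l1_norm_mat M)))"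
    using l1_nonneg[of Wp] by (simp add: mult_left_mono)
  also have "\<dots> \<le> 2 * ((l1_norm_mat Z + s * l1_norm_mat D) * (s^2 * (2 * real l * l1_norm_mat M)))"
    using l1W l1_nonneg[of M] by (intro mult_left_mono mult_right_mono) auto
  also have "\<dots> = 4 * real l * (l1_norm_mat Z + s * l1_norm_mat D) * l1_norm_mat (transpose_mat D * D) * s^2"
    unfolding M_def by (simp add: algebra_simps)
  finally show ?thesis using Ztc orth by blast
qed




definition matof :: "(nat \<times> nat \<times> nat \<Rightarrow> real) \<Rightarrow> nat \<Rightarrow> nat \<Rightarrow> nat \<Rightarrow> real mat" where
  "matof d j nr nc = mat nr nc (\<lambda>(i,k). d (j,(i,k)))"

lemma matof_carrier[simp]: "matof d j nr nc \<in> carrier_mat nr nc"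
  unfolding matof_def by simp

lemma feas_j:
  fixes P B Ws D Zs DZ E :: "real mat"
  assumes Pc: "P \<in> carrier_mat nn rr" and PP: "transpose_mat P * P = 1\<^sub>m rr" and Bc: "B \<in> carrier_mat rr m"
    and Wc: "Ws \<in> carrier_mat nn l" and Dc: "D \<in> carrier_mat nn l" and Zc: "Zs \<in> carrier_mat m l"
    and DZc: "DZ \<in> carrier_mat m l" and Ec: "E \<in> carrier_mat m l"
    and h1: "transpose_mat P * Ws + B * Zs = 0\<^sub>m rr l" and h2: "transpose_mat P * D + B * DZ = 0\<^sub>m rr l"
  shows "transpose_mat P * (Ws + t \<cdot>\<^sub>m D + (- (P * B)) * E) + B * (Zs + t \<cdot>\<^sub>m DZ + E) = 0\<^sub>m rr l"
proof -
  have PT: "transpose_mat P \<in> carrier_mat rr nn" using Pc by simp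
  have PBE: "transpose_mat P * ((- (P * B)) * E) = - (B * E)"
  proof -
    have "transpose_mat P * ((- (P * B)) * E) = - (transpose_mat P * (P * (B * E)))"
      using Pc Bc Ec by simp
    also have "transpose_mat P * (P * (B * E)) = (transpose_mat P * P) * (B * E)"
      using Pc Bc Ec by (simp add: assoc_mult_mat[of "transpose_mat P" rr nn P rr "B * E" l, symmetric] del: assoc_mult_mat)
    finally show ?thesis using PP Bc Ec by simp
  qed
  have Xc: "(- (P * B)) * E \<in> carrier_mat nn l" using Pc Bc Ec by simp
  have 1: "transpose_mat P * (Ws + t \<cdot>\<^sub>m D + (- (P * B)) * E) =
      transpose_mat P * Ws + t \<cdot>\<^sub>m (transpose_mat P * D) + - (B * E)"
  proof -
    have "transpose_mat P * (Ws + t \<cdot>\<^sub>m D + (- (P * B)) * E) = transpose_mat P * (Ws + t \<cdot>\<^sub>m D) + transpose_mat P * ((- (P * B)) * E)"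
      by (rule mult_add_distrib_mat[OF PT _ Xc]) (use Wc Dc in simp)
    also have "transpose_mat P * (Ws + t \<cdot>\<^sub>m D) = transpose_mat P * Ws + transpose_mat P * (t \<cdot>\<^sub>m D)"
      by (rule mult_add_distrib_mat[OF PT Wc]) (use Dc in simp)
    also have "transpose_mat P * (t \<cdot>\<^sub>m D) = t \<cdot>\<^sub>m (transpose_mat P * D)" by (rule mult_smult_distrib[OF PT Dc])
    finally show ?thesis unfolding PBE .
  qed
  have 2: "B * (Zs + t \<cdot>\<^sub>m DZ + E) = B * Zs + t \<cdot>\<^sub>m (B * DZ) + B * E"
  proof -
    have "B * (Zs + t \<cdot>\<^sub>m DZ + E) = B * (Zs + t \<cdot>\<^sub>m DZ) + B * E"
      by (rule mult_add_distrib_mat[OF Bc _ Ec]) (use Zc DZc in simp)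
    also have "B * (Zs + t \<cdot>\<^sub>m DZ) = B * Zs + B * (t \<cdot>\<^sub>m DZ)"
      by (rule mult_add_distrib_mat[OF Bc Zc]) (use DZc in simp)
    also have "B * (t \<cdot>\<^sub>m DZ) = t \<cdot>\<^sub>m (B * DZ)" by (rule mult_smult_distrib[OF Bc DZc])
    finally show ?thesis .
  qed
  show ?thesis unfolding 1 2
  proof (rule eq_matI)
    fix i k assume ik: "i < dim_row (0\<^sub>m rr l)" "k < dim_col (0\<^sub>m rr l)"
    have e1: "(transpose_mat P * Ws) $$ (i,k) + (B * Zs) $$ (i,k) = 0"
      using arg_cong[OF h1, of "\<lambda>X. X $$ (i,k)"] ik Pc Wc Bc Zc by simp
    have e2: "(transpose_mat P * D) $$ (i,k) + (B * DZ) $$ (i,k) = 0"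
      using arg_cong[OF h2, of "\<lambda>X. X $$ (i,k)"] ik Pc Dc Bc DZc by simp
    have e2t: "t * (transpose_mat P * D) $$ (i,k) + t * (B * DZ) $$ (i,k) = 0"
      using e2 by (simp only: distrib_left[symmetric])
    show "(transpose_mat P * Ws + t \<cdot>\<^sub>m (transpose_mat P * D) + - (B * E) + (B * Zs + t \<cdot>\<^sub>m (B * DZ) + B * E)) $$ (i,k) = 0\<^sub>m rr l $$ (i,k)"
      using ik Pc Wc Bc Zc Dc DZc Ec e1 e2t by (simp add: algebra_simps)
  qed (use Pc Wc Bc Zc Ec in auto)
qed


lemma l1_sq_bound:
  assumes "l1_norm_mat X \<le> t * c" "0 \<le> t"
  shows "(fro_norm X)^2 \<le> t^2 * c^2"
proof -
  have "(fro_norm X)^2 \<le> (l1_norm_mat X)^2" by (rule fro_sq_le)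
  also have "\<dots> \<le> (t * c)^2" using assms l1_nonneg[of X] by (intro power_mono) auto
  finally show ?thesis by (simp add: power_mult_distrib)
qed

lemma at_t:
  fixes A B P Ws :: "nat \<Rightarrow> real mat" and Zs DZ :: "real mat" and d :: "nat \<times> nat \<times> nat \<Rightarrow> real"
    and pj :: "nat \<Rightarrow> real"
  assumes feas: "feasible J n r m l A B Ws Zs"
    and loc: "\<forall>W Z. feasible J n r m l A B W Z \<and>
        (\<Sum>j\<in>{1..J}. (fro_norm (W j - Ws j))^2) + (fro_norm (Z - Zs))^2 < \<epsilon>^2
        \<longrightarrow> objective J Ws \<le> objective J W"
    and AP: "\<And>j. j \<in> {1..J} \<Longrightarrow> A j = transpose_mat (P j) \<and> P j \<in> carrier_mat (n j) (r j) \<and>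
        transpose_mat (P j) * P j = 1\<^sub>m (r j) \<and> B j \<in> carrier_mat (r j) m"
    and DZ: "DZ \<in> carrier_mat m l" "transpose_mat Zs * DZ = 0\<^sub>m l l"
    and dc: "\<And>j. j \<in> {1..J} \<Longrightarrow> A j * matof d j (n j) l + B j * DZ = 0\<^sub>m (r j) l"
    and t: "0 < t" "t \<le> 1" "(t/2)^2 * l1_norm_mat (transpose_mat DZ * DZ) \<le> 1/2"
    and lin: "\<And>j. j \<in> {1..J} \<Longrightarrow> l1_norm_mat (Ws j + t \<cdot>\<^sub>m matof d j (n j) l) = l1_norm_mat (Ws j) + t * pj j"
    and KE: "KE = real l * (l1_norm_mat Zs + l1_norm_mat DZ) * l1_norm_mat (transpose_mat DZ * DZ)"
    and small: "((\<Sum>j\<in>{1..J}. (l1_norm_mat (matof d j (n j) l) + l1_norm_mat (P j * B j) * KE)^2)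
                 + (l1_norm_mat DZ + KE)^2) * t^2 < \<epsilon>^2"
  shows "(\<Sum>j\<in>{1..J}. pj j) \<ge> - ((\<Sum>j\<in>{1..J}. l1_norm_mat (P j * B j)) * KE) * t"
proof -
  have Zsc: "Zs \<in> carrier_mat m l" and ZZ: "transpose_mat Zs * Zs = 1\<^sub>m l"
    and Wsc: "\<And>j. j \<in> {1..J} \<Longrightarrow> Ws j \<in> carrier_mat (n j) l"
    and h1: "\<And>j. j \<in> {1..J} \<Longrightarrow> A j * Ws j + B j * Zs = 0\<^sub>m (r j) l"
    using feas unfolding feasible_def by auto
  have KE0: "KE \<ge> 0" unfolding KE using l1_nonneg[of Zs] l1_nonneg[of DZ] l1_nonneg[of "transpose_mat DZ * DZ"] by simp
  obtain Zt where Ztc: "Zt \<in> carrier_mat m l" and orth: "transpose_mat Zt * Zt = 1\<^sub>m l"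
    and bd: "l1_norm_mat (Zt - Zs - (2*(t/2)) \<cdot>\<^sub>m DZ) \<le> 4 * real l * (l1_norm_mat Zs + (t/2) * l1_norm_mat DZ) * l1_norm_mat (transpose_mat DZ * DZ) * (t/2)^2"
    using stiefel_step[OF Zsc DZ(1) ZZ DZ(2), of "t/2"] t by auto
  define E where "E = Zt - Zs - t \<cdot>\<^sub>m DZ"
  have Ec: "E \<in> carrier_mat m l" unfolding E_def using Ztc DZ by simp
  have lE: "l1_norm_mat E \<le> KE * t^2"
  proof -
    have "l1_norm_mat E \<le> 4 * real l * (l1_norm_mat Zs + (t/2) * l1_norm_mat DZ) * l1_norm_mat (transpose_mat DZ * DZ) * (t/2)^2"
      using bd unfolding E_def by simp
    also have "\<dots> = real l * (l1_norm_mat Zs + (t/2) * l1_norm_mat DZ) * l1_norm_mat (transpose_mat DZ * DZ) * t^2"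
      by (simp add: power2_eq_square)
    also have "\<dots> \<le> real l * (l1_norm_mat Zs + l1_norm_mat DZ) * l1_norm_mat (transpose_mat DZ * DZ) * t^2"
    proof -
      have "(t/2) * l1_norm_mat DZ \<le> l1_norm_mat DZ"
        using t l1_nonneg[of DZ] by (intro mult_left_le_one_le) auto
      then show ?thesis using t l1_nonneg[of DZ] l1_nonneg[of "transpose_mat DZ * DZ"]
        by (intro mult_right_mono mult_left_mono add_left_mono) auto
    qed
    finally show ?thesis unfolding KE .
  qed
  have tt: "t^2 \<le> t" using t mult_left_le_one_le[of t t] by (simp add: power2_eq_square)
  have KEt: "KE * t^2 \<le> KE * t" using tt KE0 by (rule mult_left_mono)
  have Zt_eq: "Zt = Zs + t \<cdot>\<^sub>m DZ + E"
    unfolding E_def by (rule eq_matI) (use Ztc Zsc DZ in auto)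
  define W where "W j = Ws j + t \<cdot>\<^sub>m matof d j (n j) l + (- (P j * B j)) * E" for j
  have PBc: "P j * B j \<in> carrier_mat (n j) m" if "j \<in> {1..J}" for j using AP[OF that] by auto
  have Wc: "W j \<in> carrier_mat (n j) l" if "j \<in> {1..J}" for j
    unfolding W_def using Wsc[OF that] PBc[OF that] Ec by simp
  have feasW: "feasible J n r m l A B W Zt"
    unfolding feasible_def
  proof (intro conjI ballI Ztc orth)
    fix j assume j: "j \<in> {1..J}"
    show "W j \<in> carrier_mat (n j) l" by (rule Wc[OF j])
    have Aj: "A j = transpose_mat (P j)" using AP[OF j] by simp
    show "A j * W j + B j * Zt = 0\<^sub>m (r j) l"
      unfolding W_def Zt_eq Aj
      by (rule feas_j) (use AP[OF j] Wsc[OF j] Zsc DZ Ec h1[OF j] dc[OF j] Aj in auto)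
  qed
  have dW: "l1_norm_mat (W j - Ws j) \<le> t * (l1_norm_mat (matof d j (n j) l) + l1_norm_mat (P j * B j) * KE)"
    if j: "j \<in> {1..J}" for j
  proof -
    have eq: "W j - Ws j = t \<cdot>\<^sub>m matof d j (n j) l + (- (P j * B j)) * E"
      unfolding W_def by (rule eq_matI) (use Wsc[OF j] PBc[OF j] Ec in auto)
    have "l1_norm_mat (W j - Ws j) \<le> l1_norm_mat (t \<cdot>\<^sub>m matof d j (n j) l) + l1_norm_mat ((- (P j * B j)) * E)"
      unfolding eq by (rule l1_add[of _ "n j" l]) (use PBc[OF j] Ec in auto)
    also have "l1_norm_mat ((- (P j * B j)) * E) \<le> l1_norm_mat (P j * B j) * l1_norm_mat E"
      using l1_mult[of "- (P j * B j)" "n j" m E l] PBc[OF j] Ec by (simp add: l1_uminus)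
    also have "\<dots> \<le> l1_norm_mat (P j * B j) * (KE * t^2)" by (intro mult_left_mono lE l1_nonneg)
    also have "\<dots> \<le> l1_norm_mat (P j * B j) * (KE * t)"
      using KEt l1_nonneg[of "P j * B j"] by (rule mult_left_mono)
    finally show ?thesis using t by (simp add: l1_smult algebra_simps)
  qed
  have dZ: "l1_norm_mat (Zt - Zs) \<le> t * (l1_norm_mat DZ + KE)"
  proof -
    have eq: "Zt - Zs = t \<cdot>\<^sub>m DZ + E" unfolding Zt_eq by (rule eq_matI) (use Zsc DZ Ec in auto)
    have "l1_norm_mat (Zt - Zs) \<le> l1_norm_mat (t \<cdot>\<^sub>m DZ) + l1_norm_mat E"
      unfolding eq by (rule l1_add[of _ m l]) (use DZ Ec in auto)
    also have "\<dots> \<le> t * l1_norm_mat DZ + KE * t"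
      using lE t KEt by (auto simp: l1_smult)
    finally show ?thesis by (simp add: algebra_simps)
  qed
  have dist: "(\<Sum>j\<in>{1..J}. (fro_norm (W j - Ws j))^2) + (fro_norm (Zt - Zs))^2 < \<epsilon>^2"
  proof -
    have "(\<Sum>j\<in>{1..J}. (fro_norm (W j - Ws j))^2) + (fro_norm (Zt - Zs))^2
        \<le> (\<Sum>j\<in>{1..J}. t^2 * (l1_norm_mat (matof d j (n j) l) + l1_norm_mat (P j * B j) * KE)^2) + t^2 * (l1_norm_mat DZ + KE)^2"
      using dW dZ t by (intro add_mono sum_mono l1_sq_bound) auto
    also have "\<dots> = ((\<Sum>j\<in>{1..J}. (l1_norm_mat (matof d j (n j) l) + l1_norm_mat (P j * B j) * KE)^2)
                 + (l1_norm_mat DZ + KE)^2) * t^2"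
      by (simp add: sum_distrib_left algebra_simps)
    finally show ?thesis using small by simp
  qed
  have "objective J Ws \<le> objective J W" using loc feasW dist by blast
  also have "objective J W \<le> (\<Sum>j\<in>{1..J}. l1_norm_mat (Ws j) + t * pj j + l1_norm_mat (P j * B j) * (KE * t^2))"
    unfolding objective_def
  proof (rule sum_mono)
    fix j assume j: "j \<in> {1..J}"
    have "l1_norm_mat (W j) \<le> l1_norm_mat (Ws j + t \<cdot>\<^sub>m matof d j (n j) l) + l1_norm_mat ((- (P j * B j)) * E)"
      unfolding W_def by (rule l1_add[of _ "n j" l]) (use Wsc[OF j] PBc[OF j] Ec in auto)
    also have "l1_norm_mat ((- (P j * B j)) * E) \<le> l1_norm_mat (P j * B j) * l1_norm_mat E"
      using l1_mult[of "- (P j * B j)" "n j" m E l] PBc[OF j] Ec by (simp add: l1_uminus)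
    also have "\<dots> \<le> l1_norm_mat (P j * B j) * (KE * t^2)" by (intro mult_left_mono lE l1_nonneg)
    finally show "l1_norm_mat (W j) \<le> l1_norm_mat (Ws j) + t * pj j + l1_norm_mat (P j * B j) * (KE * t^2)"
      using lin[OF j] by simp
  qed
  also have "\<dots> = objective J Ws + t * (\<Sum>j\<in>{1..J}. pj j) + ((\<Sum>j\<in>{1..J}. l1_norm_mat (P j * B j)) * KE) * t * t"
    unfolding objective_def by (simp add: sum.distrib sum_distrib_left sum_distrib_right power2_eq_square algebra_simps)
  finally have "0 \<le> t * ((\<Sum>j\<in>{1..J}. pj j) + ((\<Sum>j\<in>{1..J}. l1_norm_mat (P j * B j)) * KE) * t)"
    by (simp add: algebra_simps)
  then have "0 \<le> (\<Sum>j\<in>{1..J}. pj j) + ((\<Sum>j\<in>{1..J}. l1_norm_mat (P j * B j)) * KE) * t"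
    using t(1) by (simp add: zero_le_mult_iff)
  then show ?thesis by simp
qed


definition qf :: "real \<Rightarrow> real \<Rightarrow> real" where
  "qf a y = (if a = 0 then \<bar>y\<bar> else sgn a * y)"

lemma coord_ev: "eventually (\<lambda>t. \<bar>w + t * e\<bar> = \<bar>w\<bar> + t * qf w e) (at_right (0::real))"
proof (cases "w = 0")
  case True
  show ?thesis using eventually_at_right_less[of "0::real"]
    by eventually_elim (simp add: True qf_def abs_mult)
next
  case False
  show ?thesis unfolding eventually_at_right_field
  proof (intro exI[of _ "\<bar>w\<bar> / (\<bar>e\<bar> + 1)"] conjI allI impI)
    show "0 < \<bar>w\<bar> / (\<bar>e\<bar> + 1)" using False by simp
    fix t :: real assume t: "0 < t" "t < \<bar>w\<bar> / (\<bar>e\<bar> + 1)"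
    have "t * (\<bar>e\<bar> + 1) < \<bar>w\<bar>" using t by (simp add: field_simps)
    then have te: "t * \<bar>e\<bar> < \<bar>w\<bar>" using t by (simp add: algebra_simps)
    have "\<bar>t * e\<bar> < \<bar>w\<bar>" using te t by (simp add: abs_mult)
    then show "\<bar>w + t * e\<bar> = \<bar>w\<bar> + t * qf w e"
      using False unfolding qf_def by (cases "w > 0") (auto simp: abs_if sgn_if split: if_splits)
  qed
qed

lemma l1_lin_ev:
  assumes W: "W \<in> carrier_mat nr nc"
  shows "eventually (\<lambda>t. l1_norm_mat (W + t \<cdot>\<^sub>m matof d j nr nc) =
      l1_norm_mat W + t * (\<Sum>i<nr. \<Sum>k<nc. qf (W $$ (i,k)) (d (j,(i,k))))) (at_right (0::real))"
proof -
  have "eventually (\<lambda>t. \<forall>i\<in>{..<nr}. \<forall>k\<in>{..<nc}.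
      \<bar>W $$ (i,k) + t * d (j,(i,k))\<bar> = \<bar>W $$ (i,k)\<bar> + t * qf (W $$ (i,k)) (d (j,(i,k)))) (at_right 0)"
    by (intro eventually_ball_finite ballI) (auto intro: coord_ev)
  then show ?thesis
  proof eventually_elim
    case (elim t)
    have "l1_norm_mat (W + t \<cdot>\<^sub>m matof d j nr nc) = (\<Sum>i<nr. \<Sum>k<nc. \<bar>W $$ (i,k) + t * d (j,(i,k))\<bar>)"
      unfolding l1_norm_mat_def matof_def using W by (auto intro!: sum.cong)
    also have "\<dots> = (\<Sum>i<nr. \<Sum>k<nc. \<bar>W $$ (i,k)\<bar> + t * qf (W $$ (i,k)) (d (j,(i,k))))"
      using elim by (auto intro!: sum.cong)
    also have "\<dots> = l1_norm_mat W + t * (\<Sum>i<nr. \<Sum>k<nc. qf (W $$ (i,k)) (d (j,(i,k))))"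
      unfolding l1_norm_mat_def using W by (simp add: sum.distrib sum_distrib_left)
    finally show ?case .
  qed
qed

definition Iset :: "nat \<Rightarrow> (nat \<Rightarrow> nat) \<Rightarrow> nat \<Rightarrow> (nat \<times> nat \<times> nat) set" where
  "Iset J n l = Sigma {1..J} (\<lambda>j. {..<n j} \<times> {..<l})"

lemma Iset_finite: "finite (Iset J n l)" unfolding Iset_def by auto

definition pfun :: "nat \<Rightarrow> (nat \<Rightarrow> nat) \<Rightarrow> nat \<Rightarrow> (nat \<Rightarrow> real mat) \<Rightarrow> (nat \<times> nat \<times> nat \<Rightarrow> real) \<Rightarrow> real" where
  "pfun J n l Ws d = (\<Sum>x\<in>Iset J n l. qf (Ws (fst x) $$ snd x) (d x))"

lemma sum_Iset: "(\<Sum>x\<in>Iset J n l. f x) = (\<Sum>j\<in>{1..J}. \<Sum>i<n j. \<Sum>k<l. f (j,(i,k)))"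
proof -
  have 1: "(\<Sum>j\<in>{1..J}. \<Sum>b\<in>{..<n j} \<times> {..<l}. f (j,b)) = (\<Sum>x\<in>Iset J n l. f x)"
    unfolding Iset_def by (subst sum.Sigma) (auto simp: case_prod_beta')
  have 2: "(\<Sum>b\<in>{..<n j} \<times> {..<l}. f (j,b)) = (\<Sum>i<n j. \<Sum>k<l. f (j,(i,k)))" for j
    by (simp add: sum.cartesian_product case_prod_beta')
  show ?thesis using 1 2 by simp
qed

definition Lset :: "nat \<Rightarrow> (nat \<Rightarrow> nat) \<Rightarrow> (nat \<Rightarrow> nat) \<Rightarrow> nat \<Rightarrow> nat \<Rightarrow> (nat \<Rightarrow> real mat) \<Rightarrow> (nat \<Rightarrow> real mat) \<Rightarrow> real mat \<Rightarrow> (nat \<times> nat \<times> nat \<Rightarrow> real) set" where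
  "Lset J n r m l A B Zs = {d. (\<forall>y. y \<notin> Iset J n l \<longrightarrow> d y = 0) \<and>
     (\<exists>DZ\<in>carrier_mat m l. transpose_mat Zs * DZ = 0\<^sub>m l l \<and>
        (\<forall>j\<in>{1..J}. A j * matof d j (n j) l + B j * DZ = 0\<^sub>m (r j) l))}"

lemma p_nonneg:
  fixes A B P Ws :: "nat \<Rightarrow> real mat" and Zs :: "real mat"
  assumes lm: "local_minimizer J n r m l A B Ws Zs"
    and AP: "\<And>j. j \<in> {1..J} \<Longrightarrow> A j = transpose_mat (P j) \<and> P j \<in> carrier_mat (n j) (r j) \<and>
        transpose_mat (P j) * P j = 1\<^sub>m (r j) \<and> B j \<in> carrier_mat (r j) m"
    and dL: "d \<in> Lset J n r m l A B Zs"
  shows "pfun J n l Ws d \<ge> 0"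
proof -
  have feas: "feasible J n r m l A B Ws Zs" using lm unfolding local_minimizer_def by blast
  obtain \<epsilon> where eps: "\<epsilon> > 0" and loc: "\<forall>W Z. feasible J n r m l A B W Z \<and>
        (\<Sum>j\<in>{1..J}. (fro_norm (W j - Ws j))^2) + (fro_norm (Z - Zs))^2 < \<epsilon>^2
        \<longrightarrow> objective J Ws \<le> objective J W"
    using lm unfolding local_minimizer_def by blast
  obtain DZ where DZ: "DZ \<in> carrier_mat m l" "transpose_mat Zs * DZ = 0\<^sub>m l l"
    and dc: "\<And>j. j \<in> {1..J} \<Longrightarrow> A j * matof d j (n j) l + B j * DZ = 0\<^sub>m (r j) l"
    using dL unfolding Lset_def by blast
  have Wsc: "\<And>j. j \<in> {1..J} \<Longrightarrow> Ws j \<in> carrier_mat (n j) l"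
    using feas unfolding feasible_def by auto
  define pj where "pj j = (\<Sum>i<n j. \<Sum>k<l. qf (Ws j $$ (i,k)) (d (j,(i,k))))" for j
  have psplit: "pfun J n l Ws d = (\<Sum>j\<in>{1..J}. pj j)"
    unfolding pfun_def sum_Iset pj_def by simp
  define KE where "KE = real l * (l1_norm_mat Zs + l1_norm_mat DZ) * l1_norm_mat (transpose_mat DZ * DZ)"
  define KC where "KC = (\<Sum>j\<in>{1..J}. l1_norm_mat (P j * B j))"
  define Cd where "Cd = (\<Sum>j\<in>{1..J}. (l1_norm_mat (matof d j (n j) l) + l1_norm_mat (P j * B j) * KE)^2)
                 + (l1_norm_mat DZ + KE)^2"
  have lim0: "((\<lambda>t. t) \<longlongrightarrow> (0::real)) (at_right 0)" by (rule tendsto_ident_at)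
  have ev1: "eventually (\<lambda>t. 0 < t) (at_right (0::real))" by (rule eventually_at_right_less)
  have ev2: "eventually (\<lambda>t. t < 1) (at_right (0::real))" by (rule order_tendstoD(2)[OF lim0]) simp
  have ev3: "eventually (\<lambda>t. (t/2)^2 * l1_norm_mat (transpose_mat DZ * DZ) < 1/2) (at_right (0::real))"
    by (rule order_tendstoD(2)) (rule tendsto_eq_intros lim0 | simp)+
  have ev4: "eventually (\<lambda>t. Cd * t^2 < \<epsilon>^2) (at_right (0::real))"
    by (rule order_tendstoD(2)) ((rule tendsto_eq_intros lim0 | simp)+, use eps in simp)
  have ev5: "eventually (\<lambda>t. \<forall>j\<in>{1..J}. l1_norm_mat (Ws j + t \<cdot>\<^sub>m matof d j (n j) l) = l1_norm_mat (Ws j) + t * pj j) (at_right (0::real))"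
    unfolding pj_def by (intro eventually_ball_finite ballI l1_lin_ev Wsc) auto
  have "eventually (\<lambda>t. - (KC * KE) * t \<le> pfun J n l Ws d) (at_right (0::real))"
    using ev1 ev2 ev3 ev4 ev5
  proof eventually_elim
    case (elim t)
    show ?case unfolding psplit KC_def
      by (rule at_t[OF feas loc AP DZ dc, of t pj KE]) (use elim Cd_def KE_def in \<open>auto simp: algebra_simps\<close>)
  qed
  moreover have "((\<lambda>t. - (KC * KE) * t) \<longlongrightarrow> 0) (at_right (0::real))"
    by (rule tendsto_eq_intros lim0 | simp)+
  ultimately show ?thesis
    by (intro tendsto_upperbound[of "\<lambda>t. - (KC * KE) * t" 0 "at_right (0::real)"]) auto
qed




lemma matof_dims[simp]: "dim_row (matof d j nr nc) = nr" "dim_col (matof d j nr nc) = nc"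
  unfolding matof_def by simp_all

lemma qf_add: "qf a (u + v) \<le> qf a u + qf a v"
  unfolding qf_def by (auto simp: algebra_simps abs_triangle_ineq)

lemma qf_scale: "c \<ge> 0 \<Longrightarrow> qf a (c * u) = c * qf a u"
  unfolding qf_def by (auto simp: abs_mult)

lemma qf_zero[simp]: "qf a 0 = 0" unfolding qf_def by simp

lemma pfun_sublin: "sublin (pfun J n l Ws)"
  unfolding sublin_def pfun_def
  by (auto simp: sum.distrib[symmetric] sum_distrib_left qf_scale intro!: sum_mono qf_add)

lemma matof_add: "matof (\<lambda>i. x i + y i) j nr nc = matof x j nr nc + matof y j nr nc"
  unfolding matof_def by (rule eq_matI) auto

lemma matof_scale: "matof (\<lambda>i. c * x i) j nr nc = c \<cdot>\<^sub>m matof x j nr nc"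
  unfolding matof_def by (rule eq_matI) auto

lemma matof_zero: "matof (\<lambda>_. 0) j nr nc = 0\<^sub>m nr nc"
  unfolding matof_def by (rule eq_matI) auto

lemma Lset_subsp:
  assumes AB: "\<And>j. j \<in> {1..J} \<Longrightarrow> A j \<in> carrier_mat (r j) (n j) \<and> B j \<in> carrier_mat (r j) m"
    and Zs: "Zs \<in> carrier_mat m l"
  shows "subsp (Lset J n r m l A B Zs)"
  unfolding subsp_def
proof (intro conjI ballI allI)
  show "(\<lambda>_. 0) \<in> Lset J n r m l A B Zs" unfolding Lset_def
  proof (intro CollectI conjI allI impI bexI[of _ "0\<^sub>m m l"] ballI)
    fix j assume j: "j \<in> {1..J}"
    show "A j * matof (\<lambda>_. 0) j (n j) l + B j * 0\<^sub>m m l = 0\<^sub>m (r j) l"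
    proof -
      have Aj: "A j \<in> carrier_mat (r j) (n j)" and Bj: "B j \<in> carrier_mat (r j) m" using AB[OF j] by auto
      show ?thesis unfolding matof_zero by (simp add: right_mult_zero_mat[OF Aj] right_mult_zero_mat[OF Bj])
    qed
  qed (use Zs in auto)
next
  fix x y assume x: "x \<in> Lset J n r m l A B Zs" and y: "y \<in> Lset J n r m l A B Zs"
  obtain D1 where D1: "D1 \<in> carrier_mat m l" "transpose_mat Zs * D1 = 0\<^sub>m l l"
    "\<forall>j\<in>{1..J}. A j * matof x j (n j) l + B j * D1 = 0\<^sub>m (r j) l" and sx: "\<forall>y. y \<notin> Iset J n l \<longrightarrow> x y = 0"
    using x unfolding Lset_def by blast
  obtain D2 where D2: "D2 \<in> carrier_mat m l" "transpose_mat Zs * D2 = 0\<^sub>m l l"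
    "\<forall>j\<in>{1..J}. A j * matof y j (n j) l + B j * D2 = 0\<^sub>m (r j) l" and sy: "\<forall>z. z \<notin> Iset J n l \<longrightarrow> y z = 0"
    using y unfolding Lset_def by blast
  show "(\<lambda>i. x i + y i) \<in> Lset J n r m l A B Zs" unfolding Lset_def
  proof (intro CollectI conjI allI impI bexI[of _ "D1 + D2"] ballI)
    show "transpose_mat Zs * (D1 + D2) = 0\<^sub>m l l"
      using D1 D2 Zs by (simp add: mult_add_distrib_mat[of _ l m])
    fix j assume j: "j \<in> {1..J}"
    have Aj: "A j \<in> carrier_mat (r j) (n j)" and Bj: "B j \<in> carrier_mat (r j) m" using AB[OF j] by auto
    have "A j * matof (\<lambda>i. x i + y i) j (n j) l + B j * (D1 + D2) =
        (A j * matof x j (n j) l + B j * D1) + (A j * matof y j (n j) l + B j * D2)"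
    proof -
      have e1: "A j * (matof x j (n j) l + matof y j (n j) l) = A j * matof x j (n j) l + A j * matof y j (n j) l"
        by (rule mult_add_distrib_mat[OF Aj matof_carrier matof_carrier])
      have e2: "B j * (D1 + D2) = B j * D1 + B j * D2" by (rule mult_add_distrib_mat[OF Bj D1(1) D2(1)])
      show ?thesis unfolding matof_add e1 e2 by (rule eq_matI) (simp_all add: carrier_matD[OF Aj] carrier_matD[OF Bj] carrier_matD[OF D1(1)] carrier_matD[OF D2(1)])
    qed
    then show "A j * matof (\<lambda>i. x i + y i) j (n j) l + B j * (D1 + D2) = 0\<^sub>m (r j) l"
      using D1(3) D2(3) j by simp
  qed (use sx sy D1 D2 in auto)
next
  fix x c assume x: "x \<in> Lset J n r m l A B Zs"
  obtain D1 where D1: "D1 \<in> carrier_mat m l" "transpose_mat Zs * D1 = 0\<^sub>m l l"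
    "\<forall>j\<in>{1..J}. A j * matof x j (n j) l + B j * D1 = 0\<^sub>m (r j) l" and sx: "\<forall>y. y \<notin> Iset J n l \<longrightarrow> x y = 0"
    using x unfolding Lset_def by blast
  show "(\<lambda>i. c * x i) \<in> Lset J n r m l A B Zs" unfolding Lset_def
  proof (intro CollectI conjI allI impI bexI[of _ "c \<cdot>\<^sub>m D1"] ballI)
    show "transpose_mat Zs * (c \<cdot>\<^sub>m D1) = 0\<^sub>m l l"
      using D1 Zs by (simp add: mult_smult_distrib[of _ l m])
    fix j assume j: "j \<in> {1..J}"
    have Aj: "A j \<in> carrier_mat (r j) (n j)" and Bj: "B j \<in> carrier_mat (r j) m" using AB[OF j] by auto
    have "A j * matof (\<lambda>i. c * x i) j (n j) l + B j * (c \<cdot>\<^sub>m D1) =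
        c \<cdot>\<^sub>m (A j * matof x j (n j) l + B j * D1)"
    proof -
      have e1: "A j * (c \<cdot>\<^sub>m matof x j (n j) l) = c \<cdot>\<^sub>m (A j * matof x j (n j) l)"
        by (rule mult_smult_distrib[OF Aj matof_carrier])
      have e2: "B j * (c \<cdot>\<^sub>m D1) = c \<cdot>\<^sub>m (B j * D1)" by (rule mult_smult_distrib[OF Bj D1(1)])
      show ?thesis unfolding matof_scale e1 e2 by (rule eq_matI) (simp_all add: algebra_simps carrier_matD[OF Aj] carrier_matD[OF Bj] carrier_matD[OF D1(1)])
    qed
    then show "A j * matof (\<lambda>i. c * x i) j (n j) l + B j * (c \<cdot>\<^sub>m D1) = 0\<^sub>m (r j) l"
      using D1(3) j by simp
  qed (use sx D1 in auto)
qed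

lemma pfun_ev:
  assumes x: "x \<in> Iset J n l"
  shows "pfun J n l Ws (ev x) = qf (Ws (fst x) $$ snd x) 1"
    "pfun J n l Ws (\<lambda>y. - ev x y) = qf (Ws (fst x) $$ snd x) (-1)"
proof -
  have "pfun J n l Ws (ev x) = (\<Sum>y\<in>Iset J n l. if y = x then qf (Ws (fst y) $$ snd y) 1 else 0)"
    unfolding pfun_def ev_def by (intro sum.cong) auto
  then show "pfun J n l Ws (ev x) = qf (Ws (fst x) $$ snd x) 1" using x Iset_finite by (simp add: sum.delta')
  have "pfun J n l Ws (\<lambda>y. - ev x y) = (\<Sum>y\<in>Iset J n l. if y = x then qf (Ws (fst y) $$ snd y) (-1) else 0)"
    unfolding pfun_def ev_def by (intro sum.cong) auto
  then show "pfun J n l Ws (\<lambda>y. - ev x y) = qf (Ws (fst x) $$ snd x) (-1)" using x Iset_finite by (simp add: sum.delta')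
qed

lemma subdiff_from_coords:
  fixes W G :: "real mat"
  assumes W: "W \<in> carrier_mat nr nc" and G: "G \<in> carrier_mat nr nc"
    and co: "\<And>i k. i < nr \<Longrightarrow> k < nc \<Longrightarrow> G $$ (i,k) \<le> qf (W $$ (i,k)) 1 \<and> - G $$ (i,k) \<le> qf (W $$ (i,k)) (-1)"
  shows "G \<in> subdiff_l1 W"
  unfolding subdiff_l1_def
proof (intro CollectI conjI ballI)
  show "G \<in> carrier_mat (dim_row W) (dim_col W)" using W G by simp
  fix V :: "real mat" assume V: "V \<in> carrier_mat (dim_row W) (dim_col W)"
  then have Vc: "V \<in> carrier_mat nr nc" using W by simp
  have "l1_norm_mat W + tr_inner G (V - W) = (\<Sum>i<nr. \<Sum>k<nc. \<bar>W $$ (i,k)\<bar> + G $$ (i,k) * (V $$ (i,k) - W $$ (i,k)))"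
    unfolding tr_inner_frob[OF G minus_carrier_mat[OF W]] l1_norm_mat_def frob_def
    using W G Vc by (simp add: sum.distrib)
  also have "\<dots> \<le> (\<Sum>i<nr. \<Sum>k<nc. \<bar>V $$ (i,k)\<bar>)"
  proof (intro sum_mono)
    fix i k assume ik: "i \<in> {..<nr}" "k \<in> {..<nc}"
    have c: "G $$ (i,k) \<le> qf (W $$ (i,k)) 1" "- G $$ (i,k) \<le> qf (W $$ (i,k)) (-1)" using co ik by auto
    show "\<bar>W $$ (i,k)\<bar> + G $$ (i,k) * (V $$ (i,k) - W $$ (i,k)) \<le> \<bar>V $$ (i,k)\<bar>"
    proof (cases "W $$ (i,k) = 0")
      case True
      then have "\<bar>G $$ (i,k)\<bar> \<le> 1" using c unfolding qf_def by auto
      then have "G $$ (i,k) * V $$ (i,k) \<le> \<bar>V $$ (i,k)\<bar>"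
        using abs_mult[of "G $$ (i,k)" "V $$ (i,k)"] mult_right_mono[of "\<bar>G $$ (i,k)\<bar>" 1 "\<bar>V $$ (i,k)\<bar>"]
        by (auto simp: abs_le_iff)
      then show ?thesis using True by simp
    next
      case False
      then have g: "G $$ (i,k) = sgn (W $$ (i,k))" using c unfolding qf_def by auto
      have "\<bar>W $$ (i,k)\<bar> + sgn (W $$ (i,k)) * (V $$ (i,k) - W $$ (i,k)) = sgn (W $$ (i,k)) * V $$ (i,k)"
        by (simp add: algebra_simps abs_if sgn_if)
      also have "\<dots> \<le> \<bar>V $$ (i,k)\<bar>" by (auto simp: sgn_if)
      finally show ?thesis using g by simp
    qed
  qed
  also have "\<dots> = l1_norm_mat V" unfolding l1_norm_mat_def using Vc by simp
  finally show "l1_norm_mat W + tr_inner G (V - W) \<le> l1_norm_mat V" .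
qed

lemma dsum_frob:
  "(\<Sum>x\<in>Iset J n l. d x * cf x) = (\<Sum>j\<in>{1..J}. frob (matof d j (n j) l) (mat (n j) l (\<lambda>(i,k). cf (j,(i,k)))))"
  unfolding sum_Iset frob_def matof_def by (auto intro!: sum.cong)

lemma frob_msum:
  assumes F: "\<And>j. j \<in> {1..J} \<Longrightarrow> F j \<in> carrier_mat m l" and R: "R \<in> carrier_mat m l"
  shows "frob (msum m l J F) R = (\<Sum>j\<in>{1..J}. frob (F j) R)"
proof -
  have "frob (msum m l J F) R = (\<Sum>i<m. \<Sum>k<l. \<Sum>j\<in>{1..J}. F j $$ (i,k) * R $$ (i,k))"
    unfolding frob_def msum_def by (auto simp: sum_distrib_right intro!: sum.cong)
  also have "\<dots> = (\<Sum>i<m. \<Sum>j\<in>{1..J}. \<Sum>k<l. F j $$ (i,k) * R $$ (i,k))"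
    by (rule sum.cong[OF refl]) (rule sum.swap)
  also have "\<dots> = (\<Sum>j\<in>{1..J}. \<Sum>i<m. \<Sum>k<l. F j $$ (i,k) * R $$ (i,k))"
    by (rule sum.swap)
  also have "\<dots> = (\<Sum>j\<in>{1..J}. frob (F j) R)"
  proof (rule sum.cong[OF refl])
    fix j assume j: "j \<in> {1..J}"
    have "dim_row (F j) = m" "dim_col (F j) = l" using F[OF j] by auto
    then show "(\<Sum>i<m. \<Sum>k<l. F j $$ (i,k) * R $$ (i,k)) = frob (F j) R" unfolding frob_def by simp
  qed
  finally show ?thesis .
qed




lemma frob_zero1[simp]: "frob (0\<^sub>m a b) Y = 0"
  unfolding frob_def by simp

lemma PBE_lemma:
  fixes P B R :: "real mat"
  assumes Pc: "P \<in> carrier_mat nn rr" and PP: "transpose_mat P * P = 1\<^sub>m rr" and Bc: "B \<in> carrier_mat rr m"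
    and Rc: "R \<in> carrier_mat m l"
  shows "transpose_mat P * ((- (P * B)) * R) = - (B * R)"
proof -
  have "transpose_mat P * ((- (P * B)) * R) = - (transpose_mat P * (P * (B * R)))"
    using Pc Bc Rc by simp
  also have "transpose_mat P * (P * (B * R)) = (transpose_mat P * P) * (B * R)"
    using Pc Bc Rc by (simp add: assoc_mult_mat[of "transpose_mat P" rr nn P rr "B * R" l, symmetric] del: assoc_mult_mat)
  finally show ?thesis using PP Bc Rc by simp
qed

lemma proj_zero:
  fixes P G :: "real mat"
  assumes Pc: "P \<in> carrier_mat nn rr" and PP: "transpose_mat P * P = 1\<^sub>m rr" and Gc: "G \<in> carrier_mat nn l"
  shows "transpose_mat P * (G - P * (transpose_mat P * G)) = 0\<^sub>m rr l"
proof -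
  have PT: "transpose_mat P \<in> carrier_mat rr nn" using Pc by simp
  have "transpose_mat P * (G - P * (transpose_mat P * G)) = transpose_mat P * G - transpose_mat P * (P * (transpose_mat P * G))"
    by (rule mult_minus_distrib_mat[OF PT Gc]) (use Pc Gc in simp)
  also have "transpose_mat P * (P * (transpose_mat P * G)) = (transpose_mat P * P) * (transpose_mat P * G)"
    using Pc Gc by (simp add: assoc_mult_mat[of "transpose_mat P" rr nn P rr "transpose_mat P * G" l, symmetric] del: assoc_mult_mat)
  also have "\<dots> = transpose_mat P * G" using PP Pc Gc by simp
  finally show ?thesis using Pc Gc by simp
qed

theorem lemma1:
  fixes J m l :: nat and n r :: "nat \<Rightarrow> nat"
    and X P Q S Sinv A B Ws :: "nat \<Rightarrow> real mat" and Zs :: "real mat"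
  assumes J: "J \<ge> 1" and l: "l \<ge> 1"
    and X: "\<And>j. j \<in> {1..J} \<Longrightarrow> X j \<in> carrier_mat (n j) m"
    and P: "\<And>j. j \<in> {1..J} \<Longrightarrow> P j \<in> carrier_mat (n j) (r j) \<and> transpose_mat (P j) * P j = 1\<^sub>m (r j)"
    and Q: "\<And>j. j \<in> {1..J} \<Longrightarrow> Q j \<in> carrier_mat m (r j) \<and> transpose_mat (Q j) * Q j = 1\<^sub>m (r j)"
    and S: "\<And>j. j \<in> {1..J} \<Longrightarrow> S j \<in> carrier_mat (r j) (r j) \<and>
              (\<forall>i<r j. \<forall>k<r j. i \<noteq> k \<longrightarrow> S j $$ (i,k) = 0) \<and> (\<forall>i<r j. S j $$ (i,i) > 0)"
    and svd: "\<And>j. j \<in> {1..J} \<Longrightarrow> X j = P j * S j * transpose_mat (Q j)"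
    and Sinv: "\<And>j. j \<in> {1..J} \<Longrightarrow> Sinv j \<in> carrier_mat (r j) (r j) \<and>
              Sinv j * S j = 1\<^sub>m (r j) \<and> S j * Sinv j = 1\<^sub>m (r j)"
    and A: "\<And>j. j \<in> {1..J} \<Longrightarrow> A j = transpose_mat (P j)"
    and B: "\<And>j. j \<in> {1..J} \<Longrightarrow> B j = - (Sinv j * transpose_mat (Q j))"
    and locmin: "local_minimizer J n r m l A B Ws Zs"
  shows "\<exists>L1 :: nat \<Rightarrow> real mat. \<exists>L2 :: real mat.
           (\<forall>j\<in>{1..J}. L1 j \<in> carrier_mat (r j) l) \<and> L2 \<in> carrier_mat l l \<and>
           (\<forall>j\<in>{1..J}. transpose_mat (A j) * L1 j \<in> subdiff_l1 (Ws j)) \<and>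
           msum m l J (\<lambda>j. transpose_mat (B j) * L1 j) + Zs * L2 = 0\<^sub>m m l \<and>
           (\<forall>j\<in>{1..J}. A j * Ws j + B j * Zs = 0\<^sub>m (r j) l) \<and>
           transpose_mat Zs * Zs = 1\<^sub>m l"
proof -
  have feas: "feasible J n r m l A B Ws Zs" using locmin unfolding local_minimizer_def by blast
  have Zsc: "Zs \<in> carrier_mat m l" and ZZ: "transpose_mat Zs * Zs = 1\<^sub>m l"
    and Wsc: "\<And>j. j \<in> {1..J} \<Longrightarrow> Ws j \<in> carrier_mat (n j) l"
    and h1: "\<forall>j\<in>{1..J}. A j * Ws j + B j * Zs = 0\<^sub>m (r j) l"
    using feas unfolding feasible_def by auto
  have Pc: "\<And>j. j \<in> {1..J} \<Longrightarrow> P j \<in> carrier_mat (n j) (r j)"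
    and PP: "\<And>j. j \<in> {1..J} \<Longrightarrow> transpose_mat (P j) * P j = 1\<^sub>m (r j)" using P by auto
  have Bc: "B j \<in> carrier_mat (r j) m" if j: "j \<in> {1..J}" for j
    using B[OF j] Sinv[OF j] Q[OF j] by auto
  have AP: "\<And>j. j \<in> {1..J} \<Longrightarrow> A j = transpose_mat (P j) \<and> P j \<in> carrier_mat (n j) (r j) \<and>
        transpose_mat (P j) * P j = 1\<^sub>m (r j) \<and> B j \<in> carrier_mat (r j) m"
    using A Pc PP Bc by blast
  have ABc: "\<And>j. j \<in> {1..J} \<Longrightarrow> A j \<in> carrier_mat (r j) (n j) \<and> B j \<in> carrier_mat (r j) m"
    using A Pc Bc by auto
  have Lsub: "subsp (Lset J n r m l A B Zs)" by (rule Lset_subsp[OF ABc Zsc])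
  have Lsupp: "\<forall>d\<in>Lset J n r m l A B Zs. \<forall>y. y \<notin> Iset J n l \<longrightarrow> d y = 0"
    unfolding Lset_def by blast
  have pL: "\<forall>d\<in>Lset J n r m l A B Zs. pfun J n l Ws d \<ge> 0"
    using p_nonneg[OF locmin AP] by blast
  obtain cf where cf1: "\<forall>x\<in>Iset J n l. cf x \<le> pfun J n l Ws (ev x) \<and> - cf x \<le> pfun J n l Ws (\<lambda>y. - ev x y)"
    and cf2: "\<forall>d\<in>Lset J n r m l A B Zs. (\<Sum>x\<in>Iset J n l. d x * cf x) = 0"
    using hb_coord[OF Iset_finite pfun_sublin Lsub Lsupp pL] by blast
  define Gm where "Gm j = mat (n j) l (\<lambda>(i,k). cf (j,(i,k)))" for j
  have Gmc: "Gm j \<in> carrier_mat (n j) l" for j unfolding Gm_def by simp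
  have orth0: "(\<Sum>j\<in>{1..J}. frob (matof d j (n j) l) (Gm j)) = 0" if "d \<in> Lset J n r m l A B Zs" for d
    using cf2 that dsum_frob[where d=d and cf=cf and J=J and n=n and l=l] unfolding Gm_def by simp
  have sub: "Gm j \<in> subdiff_l1 (Ws j)" if j: "j \<in> {1..J}" for j
  proof (rule subdiff_from_coords[OF Wsc[OF j] Gmc])
    fix i k assume ik: "i < n j" "k < l"
    have x: "(j,(i,k)) \<in> Iset J n l" using j ik unfolding Iset_def by auto
    show "Gm j $$ (i,k) \<le> qf (Ws j $$ (i,k)) 1 \<and> - Gm j $$ (i,k) \<le> qf (Ws j $$ (i,k)) (-1)"
      using cf1 x pfun_ev[OF x, of Ws] ik unfolding Gm_def by auto
  qed
  have rng: "Gm j = P j * (transpose_mat (P j) * Gm j)" if j: "j \<in> {1..J}" for j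
  proof -
    define K where "K = Gm j - P j * (transpose_mat (P j) * Gm j)"
    have Kc: "K \<in> carrier_mat (n j) l" unfolding K_def using Gmc Pc[OF j] by simp
    have PK: "transpose_mat (P j) * K = 0\<^sub>m (r j) l"
      unfolding K_def by (rule proj_zero[OF Pc[OF j] PP[OF j] Gmc])
    define dK where "dK x = (if fst x = j \<and> fst (snd x) < n j \<and> snd (snd x) < l then K $$ snd x else 0)" for x
    have mK: "matof dK j' (n j') l = (if j' = j then K else 0\<^sub>m (n j') l)" for j'
      unfolding matof_def dK_def by (rule eq_matI) (use Kc in auto)
    have dKL: "dK \<in> Lset J n r m l A B Zs"
      unfolding Lset_def
    proof (intro CollectI conjI allI impI bexI[of _ "0\<^sub>m m l"] ballI)
      fix y assume "y \<notin> Iset J n l"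
      then show "dK y = 0" using j unfolding dK_def Iset_def by (cases y) auto
    next
      fix j' assume j': "j' \<in> {1..J}"
      have Aj: "A j' \<in> carrier_mat (r j') (n j')" and Bj: "B j' \<in> carrier_mat (r j') m" using ABc[OF j'] by auto
      show "A j' * matof dK j' (n j') l + B j' * 0\<^sub>m m l = 0\<^sub>m (r j') l"
      proof (cases "j' = j")
        case True
        have 1: "A j' * K = 0\<^sub>m (r j') l" using PK A[OF j'] True by simp
        have 2: "B j' * 0\<^sub>m m l = 0\<^sub>m (r j') l" by (rule right_mult_zero_mat[OF Bj])
        have 3: "matof dK j' (n j') l = K" using True by (simp add: mK)
        show ?thesis unfolding 3 1 2 by simp
      next
        case False
        then show ?thesis by (simp add: mK right_mult_zero_mat[OF Aj] right_mult_zero_mat[OF Bj])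
      qed
    qed (use Zsc in auto)
    have "0 = (\<Sum>j'\<in>{1..J}. frob (matof dK j' (n j') l) (Gm j'))" using orth0[OF dKL] by simp
    also have "\<dots> = (\<Sum>j'\<in>{1..J}. if j' = j then frob K (Gm j) else 0)"
      by (intro sum.cong refl) (simp add: mK)
    also have "\<dots> = frob K (Gm j)" using j by simp
    also have "\<dots> = frob K K"
    proof -
      have PT: "transpose_mat (P j) * Gm j \<in> carrier_mat (r j) l" using Pc[OF j] Gmc by simp
      have "Gm j = K + P j * (transpose_mat (P j) * Gm j)"
        unfolding K_def by (rule eq_matI) (use Gmc Pc[OF j] in auto)
      then have "frob K (Gm j) = frob K K + frob K (P j * (transpose_mat (P j) * Gm j))"
        using frob_add2[OF Kc Kc, of "P j * (transpose_mat (P j) * Gm j)"] Pc[OF j] PT by simp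
      also have "frob K (P j * (transpose_mat (P j) * Gm j)) = frob (transpose_mat (P j) * K) (transpose_mat (P j) * Gm j)"
        by (rule frob_mult[OF Kc Pc[OF j] PT])
      finally show ?thesis unfolding PK by simp
    qed
    finally have K0: "K = 0\<^sub>m (n j) l" using frob_self0[OF Kc] by simp
    show ?thesis
    proof (rule eq_matI)
      fix i k assume ik: "i < dim_row (P j * (transpose_mat (P j) * Gm j))" "k < dim_col (P j * (transpose_mat (P j) * Gm j))"
      then have ik': "i < n j" "k < l" using Pc[OF j] Gmc[of j] by auto
      have "K $$ (i,k) = 0" using K0 ik' by simp
      then show "Gm j $$ (i,k) = (P j * (transpose_mat (P j) * Gm j)) $$ (i,k)"
        unfolding K_def using ik' Pc[OF j] Gmc[of j] by simp
    qed (use Pc[OF j] Gmc[of j] in auto)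
  qed
  define L1 where "L1 j = transpose_mat (P j) * Gm j" for j
  have L1c: "L1 j \<in> carrier_mat (r j) l" if j: "j \<in> {1..J}" for j unfolding L1_def using Pc[OF j] Gmc by simp
  define Mm where "Mm = msum m l J (\<lambda>j. transpose_mat (B j) * L1 j)"
  have Mmc: "Mm \<in> carrier_mat m l" unfolding Mm_def msum_def by simp
  define L2 where "L2 = - (transpose_mat Zs * Mm)"
  define R where "R = Mm - Zs * (transpose_mat Zs * Mm)"
  have Rc: "R \<in> carrier_mat m l" unfolding R_def using Mmc Zsc by simp
  have ZR: "transpose_mat Zs * R = 0\<^sub>m l l"
    unfolding R_def by (rule proj_zero[OF Zsc ZZ Mmc])
  define dR where "dR x = (if fst x \<in> {1..J} \<and> fst (snd x) < n (fst x) \<and> snd (snd x) < l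
       then ((- (P (fst x) * B (fst x))) * R) $$ snd x else 0)" for x
  have mR: "matof dR j (n j) l = (- (P j * B j)) * R" if j: "j \<in> {1..J}" for j
    unfolding matof_def dR_def by (rule eq_matI) (use j Pc[OF j] Bc[OF j] Rc in auto)
  have dRL: "dR \<in> Lset J n r m l A B Zs"
    unfolding Lset_def
  proof (intro CollectI conjI allI impI bexI[of _ R] ballI Rc ZR)
    fix y assume "y \<notin> Iset J n l"
    then show "dR y = 0" unfolding dR_def Iset_def by (cases y) auto
  next
    fix j assume j: "j \<in> {1..J}"
    show "A j * matof dR j (n j) l + B j * R = 0\<^sub>m (r j) l"
      unfolding mR[OF j] A[OF j] PBE_lemma[OF Pc[OF j] PP[OF j] Bc[OF j] Rc]
      by (rule eq_matI) (use Bc[OF j] Rc in auto)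
  qed
  have termeq: "frob (matof dR j (n j) l) (Gm j) = - frob (transpose_mat (B j) * L1 j) R" if j: "j \<in> {1..J}" for j
  proof -
    have BRc: "B j * R \<in> carrier_mat (r j) l" using Bc[OF j] Rc by simp
    have mRj: "matof dR j (n j) l = - (P j * (B j * R))" unfolding mR[OF j] using Pc[OF j] Bc[OF j] Rc by simp
    have PBRc: "P j * (B j * R) \<in> carrier_mat (n j) l" using Pc[OF j] BRc by simp
    have "frob (matof dR j (n j) l) (Gm j) = frob (- (P j * (B j * R))) (Gm j)" by (simp only: mRj)
    also have "\<dots> = - frob (P j * (B j * R)) (Gm j)" by (rule frob_uminus1)
    also have "frob (P j * (B j * R)) (Gm j) = frob (Gm j) (P j * (B j * R))"
      by (rule frob_comm[OF PBRc Gmc])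
    also have "frob (Gm j) (P j * (B j * R)) = frob (L1 j) (B j * R)"
      unfolding L1_def by (rule frob_mult[OF Gmc Pc[OF j] BRc])
    also have "\<dots> = frob (transpose_mat (B j) * L1 j) R"
      by (rule frob_mult[OF L1c[OF j] Bc[OF j] Rc])
    finally show ?thesis .
  qed
  have "frob Mm R = (\<Sum>j\<in>{1..J}. frob (transpose_mat (B j) * L1 j) R)"
  proof -
    have "transpose_mat (B j) * L1 j \<in> carrier_mat m l" if j: "j \<in> {1..J}" for j
      using Bc[OF j] L1c[OF j] by simp
    then show ?thesis unfolding Mm_def using Rc by (intro frob_msum) auto
  qed
  also have "\<dots> = - (\<Sum>j\<in>{1..J}. frob (matof dR j (n j) l) (Gm j))"
    by (simp add: termeq sum_negf)
  also have "\<dots> = 0" using orth0[OF dRL] by simp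
  finally have fMR: "frob Mm R = 0" .
  have "frob Mm R = frob R R"
  proof -
    have Yc: "transpose_mat Zs * Mm \<in> carrier_mat l l" using Zsc Mmc by simp
    have "Mm = R + Zs * (transpose_mat Zs * Mm)"
      unfolding R_def by (rule eq_matI) (use Mmc Zsc in auto)
    then have "frob R Mm = frob R R + frob R (Zs * (transpose_mat Zs * Mm))"
      using frob_add2[OF Rc Rc, of "Zs * (transpose_mat Zs * Mm)"] Zsc Yc by simp
    also have "frob R (Zs * (transpose_mat Zs * Mm)) = frob (transpose_mat Zs * R) (transpose_mat Zs * Mm)"
      by (rule frob_mult[OF Rc Zsc Yc])
    finally have "frob R Mm = frob R R" unfolding ZR by simp
    then show ?thesis using frob_comm[OF Mmc Rc] by simp
  qed
  then have R0: "R = 0\<^sub>m m l" using fMR frob_self0[OF Rc] by simp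
  have MZ: "Mm + Zs * L2 = 0\<^sub>m m l"
  proof (rule eq_matI)
    fix i k assume ik: "i < dim_row (0\<^sub>m m l)" "k < dim_col (0\<^sub>m m l)"
    have "R $$ (i,k) = 0" using R0 ik by simp
    then show "(Mm + Zs * L2) $$ (i,k) = 0\<^sub>m m l $$ (i,k)"
      unfolding R_def L2_def using ik Mmc Zsc by simp
  qed (use Mmc Zsc in \<open>auto simp: L2_def\<close>)
  show ?thesis
  proof (intro exI[of _ L1] exI[of _ L2] conjI ballI)
    fix j assume j: "j \<in> {1..J}"
    show "L1 j \<in> carrier_mat (r j) l" by (rule L1c[OF j])
    have "transpose_mat (A j) * L1 j = Gm j" unfolding A[OF j] L1_def using rng[OF j] by simp
    then show "transpose_mat (A j) * L1 j \<in> subdiff_l1 (Ws j)" using sub[OF j] by simp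
  next
    show "L2 \<in> carrier_mat l l" unfolding L2_def using Zsc Mmc by simp
    show "msum m l J (\<lambda>j. transpose_mat (B j) * L1 j) + Zs * L2 = 0\<^sub>m m l" using MZ unfolding Mm_def .
    show "transpose_mat Zs * Zs = 1\<^sub>m l" by (rule ZZ)
  next
    fix j assume "j \<in> {1..J}" then show "A j * Ws j + B j * Zs = 0\<^sub>m (r j) l" using h1 by blast
  qed
qed


end
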